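(* Let $\delta\in(0,1)$, let $U$ be a unitary operator on a Hilbert space $\mathcal{M}$ and suppose $U^*=\int_{\mathbb{T}}\omega\,dE(\omega)$ for some $\mathcal{B}(\mathcal{M})$-valued spectral measure $E$ on $\mathbb{T}$. Then for all $\lambda,\mu\in G_\delta$, $$1-\mu_U^*\lambda_U=\int_{\mathbb{T}}\big(1-\overline{\Psi_\omega(\mu)}\Psi_\omega(\lambda)\big)\,dE(\omega).$$
   Context: $G_\delta=\{x+iy: x,y\in\mathbb{R},\ \frac{x^2}{(1+\delta)^2}+\frac{y^2}{(1-\delta)^2}<1\}$. For $\lambda\in G_\delta$, $\lambda_U=(\delta U^*-\tfrac12\lambda)(1-\tfrac12\lambda U^* )^{-1}$. For $\omega\in\mathbb{T}$, $\Psi_\omega(\lambda)=\frac{2\omega\delta-\lambda}{2-\omega\lambda}$. *)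

theory Defs
  imports "HOL-Analysis.Analysis"
begin

class chilbert = banach +
  fixes cscale :: "complex \<Rightarrow> 'a \<Rightarrow> 'a"
    and cinner :: "'a \<Rightarrow> 'a \<Rightarrow> complex"
  assumes cscale_add_right: "cscale a (x + y) = cscale a x + cscale a y"
    and cscale_add_left: "cscale (a + b) x = cscale a x + cscale b x"
    and cscale_cscale: "cscale a (cscale b x) = cscale (a * b) x"
    and cscale_one: "cscale 1 x = x"
    and cscale_of_real: "cscale (complex_of_real r) x = scaleR r x"
    and cinner_commute: "cinner x y = cnj (cinner y x)"
    and cinner_add_left: "cinner (x + y) z = cinner x z + cinner y z"
    and cinner_cscale_left: "cinner (cscale c x) y = c * cinner x y"
    and cinner_self_norm: "cinner x x = complex_of_real ((norm x)\<^sup>2)"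

definition clinear_op :: "('a::chilbert \<Rightarrow> 'a) \<Rightarrow> bool" where
  "clinear_op A \<longleftrightarrow> (\<forall>x y. A (x + y) = A x + A y) \<and> (\<forall>c x. A (cscale c x) = cscale c (A x))"

definition bounded_op :: "('a::chilbert \<Rightarrow> 'a) \<Rightarrow> bool" where
  "bounded_op A \<longleftrightarrow> clinear_op A \<and> (\<exists>K. \<forall>x. norm (A x) \<le> norm x * K)"

definition is_adjoint :: "('a::chilbert \<Rightarrow> 'a) \<Rightarrow> ('a \<Rightarrow> 'a) \<Rightarrow> bool" where
  "is_adjoint A B \<longleftrightarrow> (\<forall>x y. cinner (A x) y = cinner x (B y))"

text \<open>The Hilbert space adjoint \<open>A\<^sup>*\<close> (unique when it exists; it exists for bounded \<open>A\<close>).\<close>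
definition adj :: "('a::chilbert \<Rightarrow> 'a) \<Rightarrow> ('a \<Rightarrow> 'a)" where
  "adj A = (THE B. is_adjoint A B)"

definition opinv :: "('a::chilbert \<Rightarrow> 'a) \<Rightarrow> ('a \<Rightarrow> 'a)" where
  "opinv A = (THE B. B \<circ> A = id \<and> A \<circ> B = id)"

definition unitary_op :: "('a::chilbert \<Rightarrow> 'a) \<Rightarrow> bool" where
  "unitary_op U \<longleftrightarrow> bounded_op U \<and> adj U \<circ> U = id \<and> U \<circ> adj U = id"

abbreviation circle :: "complex set" where
  "circle \<equiv> sphere 0 1"

definition circ_sets :: "complex set set" where
  "circ_sets = sets (restrict_space borel circle)"

definition spectral_measure :: "(complex set \<Rightarrow> ('a::chilbert \<Rightarrow> 'a)) \<Rightarrow> bool" where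
  "spectral_measure E \<longleftrightarrow>
     (\<forall>B\<in>circ_sets. bounded_op (E B) \<and> is_adjoint (E B) (E B) \<and> E B \<circ> E B = E B) \<and>
     E {} = (\<lambda>x. 0) \<and> E circle = id \<and>
     (\<forall>A\<in>circ_sets. \<forall>B\<in>circ_sets. E (A \<inter> B) = E A \<circ> E B) \<and>
     (\<forall>F. range F \<subseteq> circ_sets \<longrightarrow> disjoint_family F \<longrightarrow>
        (\<forall>x. (\<lambda>n. E (F n) x) sums E (\<Union>n. F n) x))"

text \<open>The positive scalar measure \<open>B \<mapsto> \<langle>E(B)x,x\<rangle> = \<parallel>E(B)x\<parallel>\<^sup>2\<close>.\<close>
definition spec_qmeasure :: "(complex set \<Rightarrow> ('a::chilbert \<Rightarrow> 'a)) \<Rightarrow> 'a \<Rightarrow> complex measure" where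
  "spec_qmeasure E x = measure_of circle circ_sets (\<lambda>B. ennreal ((norm (E B x))\<^sup>2))"

text \<open>\<open>A = \<integral>\<^sub>\<T> f dE\<close> (weak sense): \<open>A\<close> is a bounded operator with
  \<open>\<langle>A x, x\<rangle> = \<integral> f d\<langle>E x, x\<rangle>\<close> for all \<open>x\<close> (by polarization this determines \<open>\<langle>A x, y\<rangle>\<close>).\<close>
definition spectral_integral_is ::
  "(complex set \<Rightarrow> ('a::chilbert \<Rightarrow> 'a)) \<Rightarrow> (complex \<Rightarrow> complex) \<Rightarrow> ('a \<Rightarrow> 'a) \<Rightarrow> bool" where
  "spectral_integral_is E f A \<longleftrightarrow> bounded_op A \<and>
     (\<forall>x. cinner (A x) x = (\<integral>\<omega>. f \<omega> \<partial>(spec_qmeasure E x)))"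

definition G_delta :: "real \<Rightarrow> complex set" where
  "G_delta \<delta> = {z. (Re z)\<^sup>2 / (1 + \<delta>)\<^sup>2 + (Im z)\<^sup>2 / (1 - \<delta>)\<^sup>2 < 1}"

definition op_lambda_U :: "real \<Rightarrow> complex \<Rightarrow> ('a::chilbert \<Rightarrow> 'a) \<Rightarrow> ('a \<Rightarrow> 'a)" where
  "op_lambda_U \<delta> l U =
     (\<lambda>x. cscale (complex_of_real \<delta>) (adj U x) - cscale (l / 2) x) \<circ>
     opinv (\<lambda>x. x - cscale (l / 2) (adj U x))"

definition Psi :: "real \<Rightarrow> complex \<Rightarrow> complex \<Rightarrow> complex" where
  "Psi \<delta> \<omega> l = (2 * \<omega> * complex_of_real \<delta> - l) / (2 - \<omega> * l)"

end

theory Submission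
  imports Defs
begin


context chilbert begin
end

lemma cscale_zero_left [simp]: "cscale 0 (x::'a::chilbert) = 0"
  using cscale_of_real[of 0 x] by simp

lemma cscale_zero_right [simp]: "cscale c (0::'a::chilbert) = 0"
  using cscale_add_right[of c 0 0] by simp

lemma cscale_minus_one: "cscale (-1) (x::'a::chilbert) = - x"
  using cscale_of_real[of "-1" x] by simp

lemma cscale_minus_right: "cscale c (- (x::'a::chilbert)) = - cscale c x"
  by (metis cscale_minus_one cscale_cscale mult.commute)

lemma cscale_minus_left: "cscale (- c) (x::'a::chilbert) = - cscale c x"
  by (metis cscale_minus_one cscale_cscale mult_minus1)

lemma cscale_diff_right: "cscale c ((x::'a::chilbert) - y) = cscale c x - cscale c y"
  by (metis diff_conv_add_uminus cscale_add_right cscale_minus_right)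

lemma cscale_diff_left: "cscale (a - b) (x::'a::chilbert) = cscale a x - cscale b x"
  by (metis diff_conv_add_uminus cscale_add_left cscale_minus_left)

lemma cinner_add_right: "cinner (x::'a::chilbert) (y + z) = cinner x y + cinner x z"
  by (metis cinner_add_left cinner_commute complex_cnj_add)

lemma cinner_cscale_right: "cinner (x::'a::chilbert) (cscale c y) = cnj c * cinner x y"
  by (metis cinner_cscale_left cinner_commute complex_cnj_mult complex_cnj_cnj)

lemma cinner_zero_left [simp]: "cinner (0::'a::chilbert) y = 0"
  using cinner_add_left[of 0 0 y] by simp

lemma cinner_zero_right [simp]: "cinner (x::'a::chilbert) 0 = 0"
  using cinner_add_right[of x 0 0] by simp

lemma cinner_minus_left: "cinner (- (x::'a::chilbert)) y = - cinner x y"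
  by (metis add_eq_0_iff cinner_add_left cinner_zero_left neg_eq_iff_add_eq_0)

lemma cinner_minus_right: "cinner (x::'a::chilbert) (- y) = - cinner x y"
  by (metis add_eq_0_iff cinner_add_right cinner_zero_right neg_eq_iff_add_eq_0)

lemma cinner_diff_left: "cinner ((x::'a::chilbert) - y) z = cinner x z - cinner y z"
  by (metis diff_conv_add_uminus cinner_add_left cinner_minus_left)

lemma cinner_diff_right: "cinner (x::'a::chilbert) (y - z) = cinner x y - cinner x z"
  by (metis diff_conv_add_uminus cinner_add_right cinner_minus_right)

lemmas cinner_simps = cinner_add_left cinner_add_right cinner_diff_left cinner_diff_right
  cinner_cscale_left cinner_cscale_right cinner_minus_left cinner_minus_right

lemma norm_sq_eq: "cinner (x::'a::chilbert) x = of_real r \<Longrightarrow> (norm x)\<^sup>2 = r"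
  by (simp only: cinner_self_norm of_real_eq_iff)

lemma Re_cinner_self: "Re (cinner (x::'a::chilbert) x) = (norm x)\<^sup>2"
  by (simp only: cinner_self_norm Re_complex_of_real)

lemma norm_cscale: "norm (cscale c (x::'a::chilbert)) = cmod c * norm x"
proof -
  have "cinner (cscale c x) (cscale c x) = c * cnj c * cinner x x"
    by (simp add: cinner_simps mult.assoc)
  also have "\<dots> = of_real ((cmod c * norm x)\<^sup>2)"
    by (simp only: cinner_self_norm complex_norm_square[symmetric] of_real_mult[symmetric] power_mult_distrib)
  finally have "(norm (cscale c x))\<^sup>2 = (cmod c * norm x)\<^sup>2" by (rule norm_sq_eq)
  then show ?thesis by (simp add: power2_eq_iff_nonneg)
qed

lemma cinner_self_eq_zero: "cinner (x::'a::chilbert) x = 0 \<longleftrightarrow> x = 0"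
  by (simp add: cinner_self_norm)

lemma cinner_all_zero: "(\<And>w. cinner (x::'a::chilbert) w = 0) \<Longrightarrow> x = 0"
  using cinner_self_eq_zero by blast

lemma cinner_commute_zero: "cinner (x::'a::chilbert) y = 0 \<Longrightarrow> cinner y x = 0"
  by (metis cinner_commute complex_cnj_zero)

lemma cauchy_schwarz: "cmod (cinner (x::'a::chilbert) y) \<le> norm x * norm y"
proof (cases "y = 0")
  case True then show ?thesis by simp
next
  case False
  define t where "t = cinner x y / of_real ((norm y)\<^sup>2)"
  define a where "a = cinner x y"
  have ny: "norm y > 0" using False by simp
  have "cinner (x - cscale t y) (x - cscale t y) =
      cinner x x - cnj t * a - t * cnj a + t * cnj t * cinner y y"
    unfolding cinner_diff_left cinner_diff_right cinner_cscale_left cinner_cscale_right a_def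
    apply (subst cinner_commute[of y x])
    by (simp add: algebra_simps)
  also have "\<dots> = of_real ((norm x)\<^sup>2) - a * cnj a / of_real ((norm y)\<^sup>2)"
  proof -
    define n where "n = complex_of_real ((norm y)\<^sup>2)"
    have n0: "n \<noteq> 0" using ny by (simp add: n_def)
    have cn: "cnj t = cnj a / n" unfolding t_def a_def n_def by simp
    have tt: "t = a / n" unfolding t_def a_def n_def by simp
    have "cinner x x - cnj t * a - t * cnj a + t * cnj t * n = cinner x x - a * cnj a / n"
      unfolding cn tt using n0 by (simp add: field_simps)
    then show ?thesis by (simp only: n_def cinner_self_norm)
  qed
  also have "\<dots> = of_real ((norm x)\<^sup>2 - (cmod a)\<^sup>2 / (norm y)\<^sup>2)"
    by (simp only: complex_norm_square of_real_diff of_real_divide)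
  finally have "(norm (x - cscale t y))\<^sup>2 = (norm x)\<^sup>2 - (cmod a)\<^sup>2 / (norm y)\<^sup>2"
    by (rule norm_sq_eq)
  then have "0 \<le> (norm x)\<^sup>2 - (cmod a)\<^sup>2 / (norm y)\<^sup>2"
    by (metis zero_le_power2)
  then have "(cmod a)\<^sup>2 \<le> (norm x)\<^sup>2 * (norm y)\<^sup>2"
    using ny by (simp add: field_simps)
  then have "(cmod a)\<^sup>2 \<le> (norm x * norm y)\<^sup>2" by (simp add: power_mult_distrib)
  then show ?thesis unfolding a_def
    using power2_le_imp_le by fastforce
qed

lemma pythag: "cinner (y::'a::chilbert) z = 0 \<Longrightarrow> (norm (y + z))\<^sup>2 = (norm y)\<^sup>2 + (norm z)\<^sup>2"
proof -
  assume h: "cinner y z = 0"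
  then have h2: "cinner z y = 0" by (rule cinner_commute_zero)
  have "cinner (y + z) (y + z) = cinner y y + cinner z z"
    by (simp add: cinner_simps h h2)
  also have "\<dots> = of_real ((norm y)\<^sup>2 + (norm z)\<^sup>2)"
    by (simp only: cinner_self_norm of_real_add)
  finally show ?thesis by (rule norm_sq_eq)
qed

lemma clinear_add: "clinear_op A \<Longrightarrow> A (x + y) = A x + A y"
  by (simp add: clinear_op_def)
lemma clinear_cscale: "clinear_op A \<Longrightarrow> A (cscale c x) = cscale c (A x)"
  by (simp add: clinear_op_def)
lemma clinear_zero: "clinear_op A \<Longrightarrow> A 0 = 0"
  by (metis add_cancel_right_right clinear_add)
lemma clinear_minus: "clinear_op A \<Longrightarrow> A (- x) = - A x"
  by (metis clinear_cscale cscale_minus_one)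
lemma clinear_diff: "clinear_op A \<Longrightarrow> A (x - y) = A x - A y"
  by (metis diff_conv_add_uminus clinear_add clinear_minus)
lemma clinear_sum: "clinear_op A \<Longrightarrow> A (sum f S) = (\<Sum>i\<in>S. A (f i))"
  by (induction S rule: infinite_finite_induct) (auto simp: clinear_zero clinear_add)

lemma bounded_op_linear: "bounded_op A \<Longrightarrow> bounded_linear A"
proof -
  assume h: "bounded_op A"
  then obtain K where K: "\<And>x. norm (A x) \<le> norm x * K" unfolding bounded_op_def by blast
  have l: "clinear_op A" using h unfolding bounded_op_def by blast
  show ?thesis
    apply (rule bounded_linear_intro[where K=K])
    apply (simp add: clinear_add l)
    apply (metis clinear_cscale l cscale_of_real)
    by (rule K)
qed



lemma circle_borel: "circle \<in> sets borel"
  by (simp add: closed_sphere)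

lemma space_circ: "space (restrict_space borel circle) = circle"
  by (simp add: space_restrict_space)

lemma circ_sets_iff: "B \<in> circ_sets \<longleftrightarrow> B \<subseteq> circle \<and> B \<in> sets borel"
  unfolding circ_sets_def using circle_borel
  by (subst sets_restrict_space_iff) auto

lemma circ_sigma: "sigma_algebra circle circ_sets"
  using sets.sigma_algebra_axioms[of "restrict_space borel circle"]
  unfolding circ_sets_def space_circ .

lemma circ_empty [simp]: "{} \<in> circ_sets"
  by (simp add: circ_sets_iff)
lemma circ_circle [simp]: "circle \<in> circ_sets"
  by (simp add: circ_sets_iff circle_borel)
lemma circ_Int: "A \<in> circ_sets \<Longrightarrow> B \<in> circ_sets \<Longrightarrow> A \<inter> B \<in> circ_sets"
  by (auto simp: circ_sets_iff)
lemma circ_Un: "A \<in> circ_sets \<Longrightarrow> B \<in> circ_sets \<Longrightarrow> A \<union> B \<in> circ_sets"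
  by (auto simp: circ_sets_iff)
lemma circ_Diff: "A \<in> circ_sets \<Longrightarrow> B \<in> circ_sets \<Longrightarrow> A - B \<in> circ_sets"
  by (auto simp: circ_sets_iff)
lemma circ_sub: "A \<in> circ_sets \<Longrightarrow> A \<subseteq> circle"
  by (auto simp: circ_sets_iff)

lemma cinner_sum_left: "cinner (sum f S) (y::'a::chilbert) = (\<Sum>i\<in>S. cinner (f i) y)"
  by (induction S rule: infinite_finite_induct) (auto simp: cinner_add_left)

context
  fixes E :: "complex set \<Rightarrow> ('a::chilbert \<Rightarrow> 'a)"
  assumes SM: "spectral_measure E"
begin

lemma sm_bounded: "B \<in> circ_sets \<Longrightarrow> bounded_op (E B)"
  using SM unfolding spectral_measure_def by blast
lemma sm_lin: "B \<in> circ_sets \<Longrightarrow> clinear_op (E B)"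
  using sm_bounded unfolding bounded_op_def by blast
lemma sm_sa: "B \<in> circ_sets \<Longrightarrow> cinner (E B x) y = cinner x (E B y)"
  using SM unfolding spectral_measure_def is_adjoint_def by blast
lemma sm_empty: "E {} x = 0"
  using SM unfolding spectral_measure_def by metis
lemma sm_circle: "E circle x = x"
  using SM unfolding spectral_measure_def by simp
lemma sm_inter: "A \<in> circ_sets \<Longrightarrow> B \<in> circ_sets \<Longrightarrow> E (A \<inter> B) x = E A (E B x)"
  using SM unfolding spectral_measure_def by (metis comp_apply)
lemma sm_idem: "B \<in> circ_sets \<Longrightarrow> E B (E B x) = E B x"
  using sm_inter[of B B] by simp

lemma sm_union:
  assumes A: "A \<in> circ_sets" and B: "B \<in> circ_sets" and d: "A \<inter> B = {}"
  shows "E (A \<union> B) x = E A x + E B x"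
proof -
  define F where "F = (\<lambda>n::nat. if n = 0 then A else if n = 1 then B else {})"
  have r: "range F \<subseteq> circ_sets" using A B by (auto simp: F_def)
  have df: "disjoint_family F" using d unfolding disjoint_family_on_def F_def by auto
  have U: "(\<Union>n. F n) = A \<union> B"
    unfolding F_def by (auto split: if_splits)
  have "(\<lambda>n. E (F n) x) sums E (\<Union>n. F n) x"
    using SM r df unfolding spectral_measure_def by blast
  moreover have "(\<lambda>n. E (F n) x) sums (\<Sum>n\<in>{0,1}. E (F n) x)"
    by (rule sums_finite) (auto simp: F_def sm_empty)
  ultimately have "E (\<Union>n. F n) x = (\<Sum>n\<in>{0,1}. E (F n) x)" using sums_unique2 by blast
  then show ?thesis unfolding U by (simp add: F_def)
qed

lemma sm_compl: "B \<in> circ_sets \<Longrightarrow> E (circle - B) x = x - E B x"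
proof -
  assume B: "B \<in> circ_sets"
  have u: "(circle - B) \<union> B = circle" using circ_sub[OF B] by blast
  have "E ((circle - B) \<union> B) x = E (circle - B) x + E B x"
    by (rule sm_union) (auto intro: circ_Diff B)
  then have "x = E (circle - B) x + E B x" unfolding u sm_circle .
  then show ?thesis by (metis add_diff_cancel)
qed

lemma sm_orth: "A \<in> circ_sets \<Longrightarrow> B \<in> circ_sets \<Longrightarrow> A \<inter> B = {} \<Longrightarrow> cinner (E A x) (E B y) = 0"
proof -
  assume A: "A \<in> circ_sets" and B: "B \<in> circ_sets" and d: "A \<inter> B = {}"
  have "cinner (E A x) (E B y) = cinner x (E A (E B y))" by (rule sm_sa[OF A])
  also have "E A (E B y) = E (A \<inter> B) y" by (rule sm_inter[OF A B, symmetric])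
  finally show ?thesis by (simp add: d sm_empty)
qed

lemma sm_zero_disj: "A \<in> circ_sets \<Longrightarrow> B \<in> circ_sets \<Longrightarrow> A \<inter> B = {} \<Longrightarrow> E B y = y \<Longrightarrow> E A y = 0"
  by (metis sm_inter sm_empty)

lemma sm_norm_le: "B \<in> circ_sets \<Longrightarrow> norm (E B x) \<le> norm x"
proof -
  assume B: "B \<in> circ_sets"
  have e: "x = E B x + E (circle - B) x" unfolding sm_compl[OF B] by simp
  have o: "cinner (E B x) (E (circle - B) x) = 0"
    by (rule sm_orth) (auto intro: B circ_Diff)
  have "(norm x)\<^sup>2 = (norm (E B x))\<^sup>2 + (norm (E (circle - B) x))\<^sup>2"
    using pythag[OF o] e by metis
  then have "(norm (E B x))\<^sup>2 \<le> (norm x)\<^sup>2" by simp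
  then show ?thesis by (rule power2_le_imp_le) simp
qed

lemma sm_sum_orth:
  fixes F :: "nat \<Rightarrow> complex set"
  assumes F: "range F \<subseteq> circ_sets" and df: "disjoint_family F"
  shows "(norm (\<Sum>n<N. E (F n) x))\<^sup>2 = (\<Sum>n<N. (norm (E (F n) x))\<^sup>2)"
proof (induction N)
  case 0 then show ?case by simp
next
  case (Suc N)
  have "cinner (\<Sum>n<N. E (F n) x) (E (F N) x) = (\<Sum>n<N. cinner (E (F n) x) (E (F N) x))"
    by (rule cinner_sum_left)
  also have "\<dots> = 0"
    using F df by (intro sum.neutral ballI sm_orth) (auto simp: disjoint_family_on_def)
  finally show ?case using Suc by (simp add: pythag)
qed

lemma sm_countable:
  fixes F :: "nat \<Rightarrow> complex set"
  assumes F: "range F \<subseteq> circ_sets" and df: "disjoint_family F"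
  shows "(\<lambda>n. (norm (E (F n) x))\<^sup>2) sums (norm (E (\<Union>n. F n) x))\<^sup>2"
proof -
  have s: "(\<lambda>n. E (F n) x) sums E (\<Union>n. F n) x"
    using SM F df unfolding spectral_measure_def by blast
  then have "(\<lambda>N. \<Sum>n<N. E (F n) x) \<longlonglongrightarrow> E (\<Union>n. F n) x" by (simp add: sums_def)
  then have "(\<lambda>N. (norm (\<Sum>n<N. E (F n) x))\<^sup>2) \<longlonglongrightarrow> (norm (E (\<Union>n. F n) x))\<^sup>2"
    by (intro tendsto_intros)
  then show ?thesis unfolding sums_def sm_sum_orth[OF F df] .
qed

section \<open>The scalar measures\<close>

abbreviation "mu x \<equiv> spec_qmeasure E x"

lemma sq_sets [simp]: "sets (mu x) = circ_sets"
  unfolding spec_qmeasure_def by (rule sigma_algebra.sets_measure_of_eq[OF circ_sigma])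

lemma sq_space [simp]: "space (mu x) = circle"
  unfolding spec_qmeasure_def by (rule space_measure_of) (auto dest: circ_sub)

lemma sq_emeasure: "B \<in> circ_sets \<Longrightarrow> emeasure (mu x) B = ennreal ((norm (E B x))\<^sup>2)"
  unfolding spec_qmeasure_def
proof (rule emeasure_measure_of_sigma[OF circ_sigma])
  show "positive circ_sets (\<lambda>B. ennreal ((norm (E B x))\<^sup>2))"
    by (simp add: positive_def sm_empty)
  show "countably_additive circ_sets (\<lambda>B. ennreal ((norm (E B x))\<^sup>2))"
    unfolding countably_additive_def
    by (intro allI impI suminf_ennreal_eq sm_countable) auto
qed

lemma sq_measure: "B \<in> circ_sets \<Longrightarrow> measure (mu x) B = (norm (E B x))\<^sup>2"
  by (simp add: measure_def sq_emeasure)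

lemma sq_finite: "finite_measure (mu x)"
  by (rule finite_measureI) (simp add: sq_emeasure)

lemma sq_measure_space: "measure (mu x) (space (mu x)) = (norm x)\<^sup>2"
  by (simp add: sq_measure sm_circle)

lemma sq_meas: "f \<in> borel_measurable borel \<Longrightarrow> f \<in> borel_measurable (mu x)"
proof -
  assume "f \<in> borel_measurable borel"
  then have "f \<in> borel_measurable (restrict_space borel circle)"
    by (rule measurable_restrict_space1)
  moreover have "sets (mu x) = sets (restrict_space borel circle)" by (simp add: circ_sets_def)
  ultimately show ?thesis by (simp add: measurable_def space_circ)
qed

lemma sq_integrable:
  fixes f :: "complex \<Rightarrow> complex"
  assumes "f \<in> borel_measurable borel" and "\<And>w. w \<in> circle \<Longrightarrow> norm (f w) \<le> K"
  shows "integrable (mu x) f"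
proof -
  interpret finite_measure "mu x" by (rule sq_finite)
  show ?thesis
    by (rule integrable_const_bound[where B=K]) (auto intro!: AE_I2 assms sq_meas)
qed

lemma sq_density:
  assumes B: "B \<in> circ_sets"
  shows "mu (E B x) = density (mu x) (\<lambda>w. ennreal (indicator B w))"
proof (rule measure_eqI)
  show "sets (mu (E B x)) = sets (density (mu x) (\<lambda>w. ennreal (indicator B w)))" by simp
  fix A assume "A \<in> sets (mu (E B x))"
  then have A: "A \<in> circ_sets" by simp
  have ib: "(\<lambda>w. ennreal (indicator B w)) \<in> borel_measurable (mu x)"
    using B by (intro sq_meas measurable_compose[OF borel_measurable_indicator]) (auto simp: circ_sets_iff)
  have "emeasure (density (mu x) (\<lambda>w. ennreal (indicator B w))) A =
        (\<integral>\<^sup>+ w. ennreal (indicator B w) * indicator A w \<partial>mu x)"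
    by (rule emeasure_density[OF ib]) (simp add: A)
  also have "\<dots> = (\<integral>\<^sup>+ w. indicator (A \<inter> B) w \<partial>mu x)"
    by (intro nn_integral_cong) (auto simp: indicator_def)
  also have "\<dots> = emeasure (mu x) (A \<inter> B)"
    using A B by (simp add: circ_Int)
  also have "\<dots> = emeasure (mu (E B x)) A"
    using A B by (simp add: sq_emeasure circ_Int sm_inter)
  finally show "emeasure (mu (E B x)) A = emeasure (density (mu x) (\<lambda>w. ennreal (indicator B w))) A" ..
qed

lemma sq_integral_E:
  fixes f :: "complex \<Rightarrow> complex"
  assumes B: "B \<in> circ_sets" and f: "f \<in> borel_measurable borel"
  shows "integral\<^sup>L (mu (E B x)) f = integral\<^sup>L (mu x) (\<lambda>w. indicator B w *\<^sub>R f w)"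
  unfolding sq_density[OF B]
  by (rule integral_density) (use B f in \<open>auto simp: circ_sets_iff intro: sq_meas\<close>)

lemma sq_integral_add:
  fixes f :: "complex \<Rightarrow> complex"
  assumes B: "B \<in> circ_sets" and C: "C \<in> circ_sets" and d: "B \<inter> C = {}"
    and y: "E B y = y" and z: "E C z = z"
    and f: "f \<in> borel_measurable borel" and fb: "\<And>w. w \<in> circle \<Longrightarrow> norm (f w) \<le> K"
  shows "integral\<^sup>L (mu (y + z)) f = integral\<^sup>L (mu y) f + integral\<^sup>L (mu z) f"
proof -
  have l1: "clinear_op (E B)" "clinear_op (E C)" "clinear_op (E (B \<union> C))"
    using B C by (auto intro: sm_lin circ_Un)
  have Bz: "E B z = 0" using sm_zero_disj[OF B C d z] .
  have Cy: "E C y = 0" using sm_zero_disj[OF C B _ y] d by blast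
  have ex: "E B (y + z) = y" "E C (y + z) = z"
    using l1 Bz Cy y z by (simp_all add: clinear_add)
  have exu: "E (B \<union> C) (y + z) = (y + z)" using sm_union[OF B C d] ex by simp
  have int: "integrable (mu (y + z)) f" using sq_integrable[OF f fb] .
  have "integral\<^sup>L (mu (y + z)) f = integral\<^sup>L (mu (E (B \<union> C) (y + z))) f" using exu by (rule ssubst) (rule refl)
  also have "\<dots> = integral\<^sup>L (mu (y + z)) (\<lambda>w. indicator (B \<union> C) w *\<^sub>R f w)"
    by (rule sq_integral_E[OF circ_Un[OF B C] f])
  also have "\<dots> = integral\<^sup>L (mu (y + z)) (\<lambda>w. indicator B w *\<^sub>R f w + indicator C w *\<^sub>R f w)"
    using d by (intro Bochner_Integration.integral_cong refl) (auto simp: indicator_def)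
  also have "\<dots> = integral\<^sup>L (mu (y + z)) (\<lambda>w. indicator B w *\<^sub>R f w) + integral\<^sup>L (mu (y + z)) (\<lambda>w. indicator C w *\<^sub>R f w)"
    using B C by (intro Bochner_Integration.integral_add integrable_mult_indicator int) simp_all
  also have "\<dots> = integral\<^sup>L (mu (E B (y + z))) f + integral\<^sup>L (mu (E C (y + z))) f"
    using sq_integral_E[OF B f] sq_integral_E[OF C f] by simp
  finally show ?thesis unfolding ex .
qed

lemma sq_AE:
  assumes B: "B \<in> circ_sets" and y: "E B y = y"
  shows "AE w in mu y. w \<in> B"
proof -
  have "E (circle - B) y = 0"
    using sm_zero_disj[OF circ_Diff[OF circ_circle B] B _ y] by blast
  then have "emeasure (mu y) (circle - B) = 0"
    using B by (simp add: sq_emeasure circ_Diff)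
  then show ?thesis
    by (subst AE_iff_measurable[where N="circle - B"]) (auto simp: circ_Diff B)
qed

lemma sq_integral_est:
  fixes f :: "complex \<Rightarrow> complex"
  assumes B: "B \<in> circ_sets" and y: "E B y = y"
    and f: "f \<in> borel_measurable borel" and fb: "\<And>w. w \<in> circle \<Longrightarrow> norm (f w) \<le> K"
    and est: "\<And>w. w \<in> B \<Longrightarrow> norm (f w - k) \<le> e"
  shows "norm (integral\<^sup>L (mu y) f - k * of_real ((norm y)\<^sup>2)) \<le> e * (norm y)\<^sup>2"
proof -
  interpret finite_measure "mu y" by (rule sq_finite)
  have int: "integrable (mu y) f" using sq_integrable[OF f fb] .
  have "integral\<^sup>L (mu y) f - k * of_real ((norm y)\<^sup>2) = integral\<^sup>L (mu y) (\<lambda>w. f w - k)"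
    using int by (simp add: sq_measure sm_circle scaleR_conv_of_real mult.commute)
  also have "norm \<dots> \<le> integral\<^sup>L (mu y) (\<lambda>w. norm (f w - k))" by (rule integral_norm_bound)
  also have "\<dots> \<le> integral\<^sup>L (mu y) (\<lambda>w. e)"
    using sq_AE[OF B y] est int
    by (intro integral_mono_AE) (auto elim!: eventually_mono)
  also have "\<dots> = e * (norm y)\<^sup>2" by (simp add: sq_measure sm_circle)
  finally show ?thesis .
qed

end



lemma norm_sq_add: "(norm ((a::'a::chilbert) + b))\<^sup>2 = (norm a)\<^sup>2 + (norm b)\<^sup>2 + 2 * Re (cinner a b)"
proof -
  have "cinner (a + b) (a + b) = cinner a a + cinner b b + (cinner a b + cnj (cinner a b))"
    by (simp add: cinner_simps cinner_commute[of b a])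
  also have "\<dots> = of_real ((norm a)\<^sup>2 + (norm b)\<^sup>2 + 2 * Re (cinner a b))"
    by (simp only: cinner_self_norm complex_add_cnj of_real_add of_real_mult)
  finally show ?thesis by (rule norm_sq_eq)
qed

lemma norm_sq_diff: "(norm ((a::'a::chilbert) - b))\<^sup>2 = (norm a)\<^sup>2 + (norm b)\<^sup>2 - 2 * Re (cinner a b)"
  using norm_sq_add[of a "- b"] by (simp add: cinner_minus_right)

lemma numrad:
  fixes W :: "'a::chilbert \<Rightarrow> 'a" and P :: "'a \<Rightarrow> bool"
  assumes W: "clinear_op W"
    and P: "\<And>y z c. P y \<Longrightarrow> P z \<Longrightarrow> P (y + cscale c z)"
    and PW: "\<And>y. P y \<Longrightarrow> P (W y)"
    and est: "\<And>y. P y \<Longrightarrow> cmod (cinner (W y) y) \<le> r * (norm y)\<^sup>2"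
    and r: "0 \<le> r" and y: "P y"
  shows "norm (W y) \<le> 2 * r * norm y"
proof -
  have P0: "P 0" using P[OF y y, of "-1"] by (simp add: cscale_minus_one)
  have Psc: "P (cscale c z)" if "P z" for z c using P[OF P0 that, of c] by simp
  have Pm: "P (y - z)" if "P y" "P z" for y z
    using P[OF that, of "-1"] by (simp add: cscale_minus_one)
  have key: "cmod (cinner (W y) z) \<le> r * ((norm y)\<^sup>2 + (norm z)\<^sup>2)" if yz: "P y" "P z" for y z
  proof -
    define g where "g = (\<lambda>a. cinner (W (y + cscale a z)) (y + cscale a z))"
    have g: "g a = cinner (W y) y + cnj a * cinner (W y) z + a * cinner (W z) y + a * cnj a * cinner (W z) z" for a
      unfolding g_def by (simp add: clinear_add[OF W] clinear_cscale[OF W] cinner_simps algebra_simps)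
    have four: "4 * cinner (W y) z = g 1 - g (-1) + \<i> * g \<i> - \<i> * g (- \<i>)"
      unfolding g by (simp add: algebra_simps)
    have gb: "cmod (g a) \<le> r * (norm (y + cscale a z))\<^sup>2" for a
      unfolding g_def using yz by (intro est P)
    have n1: "norm (y + cscale 1 z) = norm (y + z)" by (simp add: cscale_one)
    have n2: "norm (y + cscale (-1) z) = norm (y - z)" by (simp add: cscale_minus_one)
    have n3: "norm (y + cscale (- \<i>) z) = norm (y - cscale \<i> z)" by (simp add: cscale_minus_left)
    have niz: "norm (cscale \<i> z) = norm z" by (simp add: norm_cscale)
    have "cmod (4 * cinner (W y) z) \<le> cmod (g 1) + cmod (g (-1)) + cmod (g \<i>) + cmod (g (- \<i>))"
    proof -
      have "cmod (g 1 - g (-1) + \<i> * g \<i> - \<i> * g (- \<i>)) \<le> cmod (g 1 - g (-1) + \<i> * g \<i>) + cmod (\<i> * g (- \<i>))"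
        by (rule norm_triangle_ineq4)
      moreover have "cmod (g 1 - g (-1) + \<i> * g \<i>) \<le> cmod (g 1 - g (-1)) + cmod (\<i> * g \<i>)"
        by (rule norm_triangle_ineq)
      moreover have "cmod (g 1 - g (-1)) \<le> cmod (g 1) + cmod (g (-1))"
        by (rule norm_triangle_ineq4)
      ultimately show ?thesis unfolding four by (simp add: norm_mult)
    qed
    also have "\<dots> \<le> r * (norm (y + z))\<^sup>2 + r * (norm (y - z))\<^sup>2 + r * (norm (y + cscale \<i> z))\<^sup>2
        + r * (norm (y - cscale \<i> z))\<^sup>2"
      using gb[of 1] gb[of "-1"] gb[of \<i>] gb[of "-\<i>"] unfolding n1 n2 n3 by linarith
    also have "\<dots> = r * (4 * (norm y)\<^sup>2 + 4 * (norm z)\<^sup>2)"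
      unfolding norm_sq_add norm_sq_diff niz by (simp add: algebra_simps)
    finally have "4 * cmod (cinner (W y) z) \<le> r * (4 * (norm y)\<^sup>2 + 4 * (norm z)\<^sup>2)"
      by (simp add: norm_mult)
    moreover have "r * (4 * (norm y)\<^sup>2 + 4 * (norm z)\<^sup>2) = 4 * (r * ((norm y)\<^sup>2 + (norm z)\<^sup>2))"
      by (simp add: algebra_simps)
    ultimately show ?thesis by linarith
  qed
  show ?thesis
  proof (cases "W y = 0")
    case True then show ?thesis using r by simp
  next
    case False
    define t where "t = norm y / norm (W y)"
    define z where "z = cscale (complex_of_real t) (W y)"
    have nW: "norm (W y) > 0" using False by simp
    have t0: "t \<ge> 0" by (simp add: t_def)
    have nz: "norm z = norm y"
    proof -
      have "norm z = cmod (complex_of_real t) * norm (W y)" by (simp only: z_def norm_cscale)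
      also have "\<dots> = t * norm (W y)" using t0 by simp
      also have "\<dots> = norm y" using nW by (simp add: t_def)
      finally show ?thesis .
    qed
    have "cinner (W y) z = complex_of_real t * cinner (W y) (W y)"
      by (simp add: z_def cinner_cscale_right)
    also have "\<dots> = complex_of_real (norm y * norm (W y))"
      using nW by (simp add: cinner_self_norm t_def power2_eq_square)
    finally have cz: "cmod (cinner (W y) z) = norm y * norm (W y)"
      by (simp only: norm_of_real abs_mult abs_norm_cancel)
    have k: "cmod (cinner (W y) z) \<le> r * ((norm y)\<^sup>2 + (norm z)\<^sup>2)"
      unfolding z_def by (rule key[OF y Psc[OF PW[OF y]]])
    have "norm y * norm (W y) \<le> r * (2 * (norm y)\<^sup>2)"
      using k unfolding cz nz by simp
    then have "norm y * norm (W y) \<le> norm y * (2 * r * norm y)"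
      by (simp add: power2_eq_square algebra_simps)
    moreover have "norm y > 0"
    proof (rule ccontr)
      assume "\<not> norm y > 0"
      then have "y = 0" by simp
      then show False using False clinear_zero[OF W] by simp
    qed
    ultimately show ?thesis by (simp add: mult_le_cancel_left_pos)
  qed
qed

section \<open>Commutation of V with E\<close>

context
  fixes E :: "complex set \<Rightarrow> ('a::chilbert \<Rightarrow> 'a)" and V :: "'a \<Rightarrow> 'a"
  assumes SM: "spectral_measure E"
    and VS: "spectral_integral_is E (\<lambda>w. w) V"
begin

lemma V_lin: "clinear_op V"
  using VS unfolding spectral_integral_is_def bounded_op_def by blast

lemma V_int: "cinner (V x) x = (\<integral>w. w \<partial>(spec_qmeasure E x))"
  using VS unfolding spectral_integral_is_def by blast

lemma V_quad_add:
  assumes B: "B \<in> circ_sets" and C: "C \<in> circ_sets" and d: "B \<inter> C = {}"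
    and y: "E B y = y" and z: "E C z = z"
  shows "cinner (V (y + z)) (y + z) = cinner (V y) y + cinner (V z) z"
  unfolding V_int by (rule sq_integral_add[OF SM B C d y z, where K=1]) auto

lemma V_cross_zero:
  assumes B: "B \<in> circ_sets" and C: "C \<in> circ_sets" and d: "B \<inter> C = {}"
    and y: "E B y = y" and z: "E C z = z"
  shows "cinner (V y) z = 0"
proof -
  have z': "E C (cscale \<i> z) = cscale \<i> z"
    using z sm_lin[OF SM C] by (simp add: clinear_cscale)
  have "cinner (V z) y + cinner (V y) z = 0"
    using V_quad_add[OF B C d y z]
    by (simp add: clinear_add[OF V_lin] cinner_simps)
  then have e1: "cinner (V y) z + cinner (V z) y = 0" by (simp add: add.commute)
  have zz: "cinner (V (cscale \<i> z)) (cscale \<i> z) = cinner (V z) z"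
    by (simp add: clinear_cscale[OF V_lin] cinner_simps)
  have "cinner (V y) y + cinner (V y) (cscale \<i> z) + cinner (V (cscale \<i> z)) y + cinner (V (cscale \<i> z)) (cscale \<i> z)
      = cinner (V y) y + cinner (V (cscale \<i> z)) (cscale \<i> z)"
    using V_quad_add[OF B C d y z'] unfolding clinear_add[OF V_lin] cinner_add_left cinner_add_right
    by (simp add: algebra_simps)
  then have e2: "cinner (V y) (cscale \<i> z) + cinner (V (cscale \<i> z)) y = 0"
    by (simp add: algebra_simps)
  have "cinner (V y) (cscale \<i> z) = - \<i> * cinner (V y) z" by (simp add: cinner_simps)
  moreover have "cinner (V (cscale \<i> z)) y = \<i> * cinner (V z) y"
    by (simp add: clinear_cscale[OF V_lin] cinner_simps)
  ultimately have e3: "- \<i> * cinner (V y) z + \<i> * cinner (V z) y = 0" using e2 by simp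
  from e1 have "cinner (V z) y = - cinner (V y) z" by (metis add.commute eq_neg_iff_add_eq_0)
  with e3 have "2 * \<i> * cinner (V y) z = 0" by simp
  then show ?thesis by simp
qed

lemma V_off_zero:
  assumes B: "B \<in> circ_sets" and C: "C \<in> circ_sets" and d: "B \<inter> C = {}"
  shows "E C (V (E B x)) = 0"
proof (rule cinner_all_zero)
  fix w
  have "cinner (E C (V (E B x))) w = cinner (V (E B x)) (E C w)" by (rule sm_sa[OF SM C])
  also have "\<dots> = 0"
    by (rule V_cross_zero[OF B C d]) (auto simp: sm_idem[OF SM] B C)
  finally show "cinner (E C (V (E B x))) w = 0" .
qed

lemma V_comm: assumes B: "B \<in> circ_sets" shows "V (E B x) = E B (V x)"
proof -
  have Bc: "circle - B \<in> circ_sets" using B by (simp add: circ_Diff)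
  have "V (E B x) = E B (V (E B x)) + E (circle - B) (V (E B x))"
    using sm_compl[OF SM B] by simp
  also have "E (circle - B) (V (E B x)) = 0" by (rule V_off_zero[OF B Bc]) blast
  also have "E B (V (E (circle - B) x)) = 0" by (rule V_off_zero[OF Bc B]) blast
  then have "E B (V (E B x)) = E B (V (E B x)) + E B (V (E (circle - B) x))"
    by simp
  also have "\<dots> = E B (V x)"
    using sm_compl[OF SM B, of x] sm_lin[OF SM B] V_lin
    by (simp add: clinear_add[symmetric])
  finally show ?thesis by simp
qed

lemma W_lin: "clinear_op (\<lambda>y. V y - cscale c y)"
  unfolding clinear_op_def
proof (intro conjI allI)
  fix x y show "V (x + y) - cscale c (x + y) = V x - cscale c x + (V y - cscale c y)"
    by (simp add: clinear_add[OF V_lin] cscale_add_right)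
next
  fix a x show "V (cscale a x) - cscale c (cscale a x) = cscale a (V x - cscale c x)"
    by (simp add: clinear_cscale[OF V_lin] cscale_diff_right cscale_cscale mult.commute)
qed

lemma V_local:
  assumes B: "B \<in> circ_sets" and c: "c \<in> B" and Bd: "B \<subseteq> ball c d" and y: "E B y = y"
    and d: "0 \<le> d"
  shows "norm (V y - cscale c y) \<le> 2 * d * norm y"
proof -
  have P: "E B (y + cscale a z) = y + cscale a z" if "E B y = y" "E B z = z" for y z a
    using that sm_lin[OF SM B] by (simp add: clinear_add clinear_cscale)
  have PW: "E B (V y - cscale c y) = V y - cscale c y" if "E B y = y" for y
  proof -
    have "E B (V y - cscale c y) = E B (V y) - cscale c (E B y)"
      using sm_lin[OF SM B] by (simp add: clinear_diff clinear_cscale)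
    also have "E B (V y) = V (E B y)" by (rule V_comm[OF B, symmetric])
    finally show ?thesis using that by simp
  qed
  have est: "cmod (cinner (V y - cscale c y) y) \<le> d * (norm y)\<^sup>2" if yB: "E B y = y" for y
  proof -
    have "cinner (V y - cscale c y) y = (\<integral>w. w \<partial>(spec_qmeasure E y)) - c * of_real ((norm y)\<^sup>2)"
      by (simp only: cinner_diff_left cinner_cscale_left V_int cinner_self_norm)
    also have "cmod \<dots> \<le> d * (norm y)\<^sup>2"
    proof (rule sq_integral_est[OF SM B yB, where K=1])
      show "(\<lambda>w. w) \<in> borel_measurable borel" by simp
      show "norm w \<le> 1" if "w \<in> circle" for w :: complex using that by simp
      show "norm (w - c) \<le> d" if "w \<in> B" for w
        using that Bd by (force simp: dist_norm norm_minus_commute)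
    qed
    finally show ?thesis .
  qed
  show ?thesis
    by (rule numrad[OF W_lin, where P="\<lambda>y. E B y = y", OF P PW est d y])
qed

end



section \<open>Partitions of the circle\<close>

definition part :: "nat \<Rightarrow> int \<times> int \<Rightarrow> complex set" where
  "part n = (\<lambda>(j,k). {w \<in> circle. \<lfloor>real n * Re w\<rfloor> = j \<and> \<lfloor>real n * Im w\<rfloor> = k})"

definition pidx :: "nat \<Rightarrow> (int \<times> int) set" where
  "pidx n = {-int n..int n} \<times> {-int n..int n}"

lemma pidx_finite: "finite (pidx n)"
  by (simp add: pidx_def)

lemma part_circ: "part n i \<in> circ_sets"
proof -
  obtain j k where i: "i = (j, k)" by force
  have "part n i = circle \<inter> ({w. real_of_int j \<le> real n * Re w} \<inter> {w. real n * Re w < real_of_int j + 1}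
     \<inter> {w. real_of_int k \<le> real n * Im w} \<inter> {w. real n * Im w < real_of_int k + 1})"
    unfolding part_def i by (auto simp: floor_eq_iff)
  also have "\<dots> \<in> sets borel" by measurable
  finally show ?thesis unfolding circ_sets_iff by (auto simp: part_def i)
qed

lemma part_disj: "i \<noteq> i' \<Longrightarrow> part n i \<inter> part n i' = {}"
  by (cases i; cases i') (auto simp: part_def)

lemma part_cover: "(\<Union>i\<in>pidx n. part n i) = circle"
proof
  show "(\<Union>i\<in>pidx n. part n i) \<subseteq> circle" by (auto simp: part_def)
  show "circle \<subseteq> (\<Union>i\<in>pidx n. part n i)"
  proof
    fix w :: complex assume w: "w \<in> circle"
    then have nw: "norm w = 1" by simp
    have r: "\<bar>Re w\<bar> \<le> 1" "\<bar>Im w\<bar> \<le> 1" using abs_Re_le_cmod[of w] abs_Im_le_cmod[of w] nw by auto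
    have "real n * (-1) \<le> real n * Re w" "real n * Re w \<le> real n * 1"
      using r(1) by (intro mult_left_mono; auto)+
    then have b1: "- real n \<le> real n * Re w" "real n * Re w \<le> real n" by simp_all
    have "real n * (-1) \<le> real n * Im w" "real n * Im w \<le> real n * 1"
      using r(2) by (intro mult_left_mono; auto)+
    then have b2: "- real n \<le> real n * Im w" "real n * Im w \<le> real n" by simp_all
    have "(\<lfloor>real n * Re w\<rfloor>, \<lfloor>real n * Im w\<rfloor>) \<in> pidx n"
      using b1 b2 unfolding pidx_def by (auto simp: le_floor_iff floor_le_iff)
    moreover have "w \<in> part n (\<lfloor>real n * Re w\<rfloor>, \<lfloor>real n * Im w\<rfloor>)"
      using w by (simp add: part_def)
    ultimately show "w \<in> (\<Union>i\<in>pidx n. part n i)" by blast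
  qed
qed

lemma part_small:
  assumes n: "n > 0" and w: "w \<in> part n i" and c: "c \<in> part n i"
  shows "cmod (w - c) < 2 / real n"
proof -
  obtain j k where i: "i = (j, k)" by force
  have fw: "\<lfloor>real n * Re w\<rfloor> = j" "\<lfloor>real n * Im w\<rfloor> = k"
    and fc: "\<lfloor>real n * Re c\<rfloor> = j" "\<lfloor>real n * Im c\<rfloor> = k"
    using w c by (auto simp: part_def i)
  have np: "real n > 0" using n by simp
  have "\<bar>real n * Re w - real n * Re c\<bar> < 1" using fw(1) fc(1) by (auto simp: floor_eq_iff)
  moreover have "\<bar>real n * Re w - real n * Re c\<bar> = \<bar>Re (w - c)\<bar> * real n"
  proof -
    have e: "real n * Re w - real n * Re c = Re (w - c) * real n" by (simp add: algebra_simps)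
    show ?thesis unfolding e abs_mult by simp
  qed
  ultimately have a: "\<bar>Re (w - c)\<bar> < 1 / real n" using np by (simp add: pos_less_divide_eq)
  have "\<bar>real n * Im w - real n * Im c\<bar> < 1" using fw(2) fc(2) by (auto simp: floor_eq_iff)
  moreover have "\<bar>real n * Im w - real n * Im c\<bar> = \<bar>Im (w - c)\<bar> * real n"
  proof -
    have e: "real n * Im w - real n * Im c = Im (w - c) * real n" by (simp add: algebra_simps)
    show ?thesis unfolding e abs_mult by simp
  qed
  ultimately have b: "\<bar>Im (w - c)\<bar> < 1 / real n" using np by (simp add: pos_less_divide_eq)
  have "cmod (w - c) \<le> \<bar>Re (w - c)\<bar> + \<bar>Im (w - c)\<bar>" by (rule cmod_le)
  also have "\<dots> < 2 / real n" using a b by simp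
  finally show ?thesis .
qed

section \<open>Additive functionals vanish\<close>

context
  fixes E :: "complex set \<Rightarrow> ('a::chilbert \<Rightarrow> 'a)"
  assumes SM: "spectral_measure E"
begin

lemma fin_union_circ: "finite I \<Longrightarrow> (\<And>i. i \<in> I \<Longrightarrow> P i \<in> circ_sets) \<Longrightarrow> (\<Union>i\<in>I. P i) \<in> circ_sets"
  by (induction I rule: finite_induct) (auto intro: circ_Un)

lemma E_sum:
  assumes "finite I" "\<And>i. i \<in> I \<Longrightarrow> P i \<in> circ_sets"
    "\<And>i j. i \<in> I \<Longrightarrow> j \<in> I \<Longrightarrow> i \<noteq> j \<Longrightarrow> P i \<inter> P j = {}"
  shows "(\<Sum>i\<in>I. E (P i) x) = E (\<Union>i\<in>I. P i) x"
  using assms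
proof (induction I rule: finite_induct)
  case empty then show ?case by (simp add: sm_empty[OF SM])
next
  case (insert j I)
  have U: "(\<Union>i\<in>I. P i) \<in> circ_sets" using insert by (intro fin_union_circ) auto
  have d: "P j \<inter> (\<Union>i\<in>I. P i) = {}" using insert.prems(2) insert.hyps(2) by fastforce
  have "E (\<Union>i\<in>insert j I. P i) x = E (P j) x + E (\<Union>i\<in>I. P i) x"
    using sm_union[OF SM _ U d] insert.prems(1) by simp
  also have "E (\<Union>i\<in>I. P i) x = (\<Sum>i\<in>I. E (P i) x)"
    using insert by (intro sym[OF insert.IH]) auto
  finally show ?case using insert.hyps by simp
qed

lemma Q_sum:
  fixes Q :: "'a \<Rightarrow> complex"
  assumes addH: "\<forall>B C y z. B \<in> circ_sets \<longrightarrow> C \<in> circ_sets \<longrightarrow> B \<inter> C = {} \<longrightarrow> E B y = y \<longrightarrow> E C z = z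
      \<longrightarrow> Q (y + z) = Q y + Q z"
  assumes "finite I" "\<And>i. i \<in> I \<Longrightarrow> P i \<in> circ_sets"
    "\<And>i j. i \<in> I \<Longrightarrow> j \<in> I \<Longrightarrow> i \<noteq> j \<Longrightarrow> P i \<inter> P j = {}"
    "\<And>i. i \<in> I \<Longrightarrow> E (P i) (y i) = y i"
  shows "Q (\<Sum>i\<in>I. y i) = (\<Sum>i\<in>I. Q (y i)) \<and> E (\<Union>i\<in>I. P i) (\<Sum>i\<in>I. y i) = (\<Sum>i\<in>I. y i)"
  using assms(2-)
proof (induction I rule: finite_induct)
  note add = addH[rule_format]
  case empty
  have "Q (0 + 0) = Q 0 + Q 0" by (rule add[of "{}" "{}"]) (auto simp: sm_empty[OF SM])
  then show ?case by (simp add: sm_empty[OF SM])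
next
  case (insert j I)
  note add = addH[rule_format]
  let ?S = "\<Sum>i\<in>I. y i"
  let ?U = "\<Union>i\<in>I. P i"
  have U: "?U \<in> circ_sets" using insert by (intro fin_union_circ) auto
  have Pj: "P j \<in> circ_sets" using insert by auto
  have d: "P j \<inter> ?U = {}" using insert.prems(2) insert.hyps(2) by fastforce
  have IH: "Q ?S = (\<Sum>i\<in>I. Q (y i))" "E ?U ?S = ?S" using insert by auto
  have yj: "E (P j) (y j) = y j" using insert by auto
  have "Q (y j + ?S) = Q (y j) + Q ?S" by (rule add[OF Pj U d yj IH(2)])
  moreover have "E (P j \<union> ?U) (y j + ?S) = y j + ?S"
  proof -
    have z1: "E (P j) ?S = 0" by (rule sm_zero_disj[OF SM Pj U d IH(2)])
    have z2: "E ?U (y j) = 0" using sm_zero_disj[OF SM U Pj _ yj] d by blast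
    show ?thesis using sm_union[OF SM Pj U d] sm_lin[OF SM Pj] sm_lin[OF SM U] z1 z2 yj IH(2)
      by (simp add: clinear_add)
  qed
  ultimately show ?case using insert.hyps IH(1) by simp
qed

lemma eps_zero:
  fixes q :: complex
  assumes "\<And>e. e > 0 \<Longrightarrow> cmod q \<le> e * N" and N: "N \<ge> 0"
  shows "q = 0"
proof (rule ccontr)
  assume "q \<noteq> 0"
  then have qp: "cmod q > 0" by simp
  have "cmod q \<le> (cmod q / (N + 1)) * N" using assms(1)[of "cmod q / (N + 1)"] qp N by simp
  also have "\<dots> < cmod q" using qp N by (simp add: field_simps)
  finally show False by simp
qed

lemma partition_zero:
  fixes Q :: "'a \<Rightarrow> complex"
  assumes add: "\<And>B C y z. B \<in> circ_sets \<Longrightarrow> C \<in> circ_sets \<Longrightarrow> B \<inter> C = {} \<Longrightarrow> E B y = y \<Longrightarrow> E C z = z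
      \<Longrightarrow> Q (y + z) = Q y + Q z"
    and loc: "\<And>e. e > 0 \<Longrightarrow> \<exists>d>0. \<forall>B c y. B \<in> circ_sets \<longrightarrow> c \<in> B \<longrightarrow> B \<subseteq> ball c d \<longrightarrow> E B y = y
      \<longrightarrow> cmod (Q y) \<le> e * (norm y)\<^sup>2"
  shows "Q x = 0"
proof (rule eps_zero[where N="(norm x)\<^sup>2"])
  fix e :: real assume e: "e > 0"
  obtain d where d: "d > 0" and dl: "\<And>B c y. B \<in> circ_sets \<Longrightarrow> c \<in> B \<Longrightarrow> B \<subseteq> ball c d \<Longrightarrow> E B y = y
      \<Longrightarrow> cmod (Q y) \<le> e * (norm y)\<^sup>2"
    using loc[OF e] by blast
  define n where "n = nat \<lceil>2 / d\<rceil> + 1"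
  have n0: "n > 0" by (simp add: n_def)
  have nd: "2 / real n < d"
  proof -
    have "2 / d < real n" unfolding n_def by linarith
    then show ?thesis using d n0 by (simp add: field_simps)
  qed
  let ?I = "pidx n"
  let ?y = "\<lambda>i. E (part n i) x"
  have fin: "finite ?I" by (rule pidx_finite)
  have Pc: "\<And>i. i \<in> ?I \<Longrightarrow> part n i \<in> circ_sets" by (rule part_circ)
  have Pd: "\<And>i j. i \<in> ?I \<Longrightarrow> j \<in> ?I \<Longrightarrow> i \<noteq> j \<Longrightarrow> part n i \<inter> part n j = {}" by (rule part_disj)
  have Py: "\<And>i. i \<in> ?I \<Longrightarrow> E (part n i) (?y i) = ?y i" by (simp add: sm_idem[OF SM] part_circ)
  have xs: "x = (\<Sum>i\<in>?I. ?y i)"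
    using E_sum[OF pidx_finite Pc Pd, where x=x] by (simp add: part_cover sm_circle[OF SM])
  have "Q (\<Sum>i\<in>?I. ?y i) = (\<Sum>i\<in>?I. Q (?y i)) \<and> E (\<Union>i\<in>?I. part n i) (\<Sum>i\<in>?I. ?y i) = (\<Sum>i\<in>?I. ?y i)"
  proof (rule Q_sum[where I="pidx n" and P="part n" and y="?y"])
    show "\<forall>B C y z. B \<in> circ_sets \<longrightarrow> C \<in> circ_sets \<longrightarrow> B \<inter> C = {} \<longrightarrow> E B y = y \<longrightarrow> E C z = z
      \<longrightarrow> Q (y + z) = Q y + Q z" using add by blast
  qed (use fin Pc Pd Py in auto)
  then have Qs: "Q x = (\<Sum>i\<in>?I. Q (?y i))" using xs by simp
  have add2: "complex_of_real ((norm (y + z))\<^sup>2) = complex_of_real ((norm y)\<^sup>2) + complex_of_real ((norm z)\<^sup>2)"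
    if "B \<in> circ_sets" "C \<in> circ_sets" "B \<inter> C = {}" "E B y = y" "E C z = z" for B C y z
  proof -
    have "cinner y z = 0" using sm_orth[OF SM that(1-3), of y z] that(4,5) by simp
    then show ?thesis by (simp add: pythag)
  qed
  have "complex_of_real ((norm (\<Sum>i\<in>?I. ?y i))\<^sup>2) = (\<Sum>i\<in>?I. complex_of_real ((norm (?y i))\<^sup>2))
     \<and> E (\<Union>i\<in>?I. part n i) (\<Sum>i\<in>?I. ?y i) = (\<Sum>i\<in>?I. ?y i)"
  proof (rule Q_sum[where I="pidx n" and P="part n" and y="?y" and Q="\<lambda>y. complex_of_real ((norm y)\<^sup>2)"])
    show "\<forall>B C y z. B \<in> circ_sets \<longrightarrow> C \<in> circ_sets \<longrightarrow> B \<inter> C = {} \<longrightarrow> E B y = y \<longrightarrow> E C z = z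
      \<longrightarrow> complex_of_real ((norm (y + z))\<^sup>2) = complex_of_real ((norm y)\<^sup>2) + complex_of_real ((norm z)\<^sup>2)"
      using add2 by blast
  qed (use fin Pc Pd Py in auto)
  then have Ns: "complex_of_real ((norm x)\<^sup>2) = (\<Sum>i\<in>?I. complex_of_real ((norm (?y i))\<^sup>2))"
    using xs by simp
  then have Ns': "(norm x)\<^sup>2 = (\<Sum>i\<in>?I. (norm (?y i))\<^sup>2)"
    by (metis of_real_eq_iff of_real_sum)
  have each: "cmod (Q (?y i)) \<le> e * (norm (?y i))\<^sup>2" if i: "i \<in> ?I" for i
  proof (cases "part n i = {}")
    case True
    have "Q (0 + 0) = Q 0 + Q 0" by (rule add[of "{}" "{}"]) (auto simp: sm_empty[OF SM])
    then have "Q 0 = 0" by simp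
    then show ?thesis using True by (simp add: sm_empty[OF SM])
  next
    case False
    then obtain c where c: "c \<in> part n i" by blast
    have "part n i \<subseteq> ball c d"
    proof
      fix w assume "w \<in> part n i"
      then have "cmod (w - c) < 2 / real n" using part_small[OF n0 _ c] by blast
      then show "w \<in> ball c d" using nd by (simp add: dist_norm norm_minus_commute)
    qed
    then show ?thesis using dl[OF part_circ c] Py[OF i] by blast
  qed
  have "cmod (Q x) \<le> (\<Sum>i\<in>?I. cmod (Q (?y i)))" unfolding Qs by (rule norm_sum)
  also have "\<dots> \<le> (\<Sum>i\<in>?I. e * (norm (?y i))\<^sup>2)" by (rule sum_mono) (rule each)
  also have "\<dots> = e * (norm x)\<^sup>2" by (simp add: Ns' sum_distrib_left)
  finally show "cmod (Q x) \<le> e * (norm x)\<^sup>2" .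
qed simp

end



lemma bl_cscale: "bounded_linear (cscale c :: 'a::chilbert \<Rightarrow> 'a)"
proof (rule bounded_linear_intro[where K="cmod c"])
  fix x y :: 'a show "cscale c (x + y) = cscale c x + cscale c y" by (rule cscale_add_right)
next
  fix r :: real and x :: 'a
  show "cscale c (r *\<^sub>R x) = r *\<^sub>R cscale c x"
    by (metis cscale_of_real cscale_cscale mult.commute)
next
  fix x :: 'a show "norm (cscale c x) \<le> norm x * cmod c" by (simp add: norm_cscale mult.commute)
qed

lemma clinear_bl: "clinear_op T \<Longrightarrow> (\<And>w. norm (T w) \<le> K * norm w) \<Longrightarrow> bounded_linear T"
  by (rule bounded_op_linear) (auto simp: bounded_op_def mult.commute)

lemma clinear_comp: "clinear_op S \<Longrightarrow> clinear_op T \<Longrightarrow> clinear_op (\<lambda>x. S (T x))"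
  by (simp add: clinear_op_def)

lemma clinear_funpow: "clinear_op T \<Longrightarrow> clinear_op (T ^^ n)"
  by (induction n) (auto simp: clinear_op_def)

lemma funpow_contr:
  fixes T :: "'a::real_normed_vector \<Rightarrow> 'a"
  assumes Tc: "\<And>w. norm (T w) \<le> norm w" shows "norm ((T ^^ n) w) \<le> norm w"
proof (induction n)
  case 0
  show ?case by (simp add: funpow_0)
next
  case (Suc n)
  have "norm ((T ^^ Suc n) w) = norm (T ((T ^^ n) w))" by simp
  also have "\<dots> \<le> norm ((T ^^ n) w)" by (rule Tc)
  finally show ?case using Suc by linarith
qed

definition neu :: "('a::chilbert \<Rightarrow> 'a) \<Rightarrow> complex \<Rightarrow> 'a \<Rightarrow> 'a" where
  "neu T a w = (\<Sum>n. cscale (a ^ n) ((T ^^ n) w))"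

lemma neumann:
  fixes T :: "'a::chilbert \<Rightarrow> 'a"
  assumes T: "clinear_op T" and Tc: "\<And>w. norm (T w) \<le> norm w" and a: "cmod a < 1"
  shows "clinear_op (neu T a)"
    and "\<And>w. neu T a (w - cscale a (T w)) = w"
    and "\<And>w. neu T a w - cscale a (T (neu T a w)) = w"
    and "\<And>w. norm (neu T a w) \<le> norm w / (1 - cmod a)"
    and "\<And>w. neu T a (T w) = T (neu T a w)"
proof -
  have blT: "bounded_linear T" using clinear_bl[OF T, of 1] Tc by simp
  have nb: "norm (cscale (a ^ n) ((T ^^ n) w)) \<le> cmod a ^ n * norm w" for n w
  proof -
    have "norm (cscale (a ^ n) ((T ^^ n) w)) = cmod a ^ n * norm ((T ^^ n) w)"
      by (simp add: norm_cscale norm_power)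
    also have "\<dots> \<le> cmod a ^ n * norm w"
      by (rule mult_left_mono[OF funpow_contr[OF Tc]]) simp
    finally show ?thesis .
  qed
  have gs: "summable (\<lambda>n. cmod a ^ n * norm w)" for w
    using a by (intro summable_mult2 summable_geometric) simp
  have sn: "summable (\<lambda>n. norm (cscale (a ^ n) ((T ^^ n) w)))" for w
    by (rule summable_comparison_test'[OF gs[of w], where N=0]) (simp add: nb)
  have s: "summable (\<lambda>n. cscale (a ^ n) ((T ^^ n) w))" for w
    by (rule summable_norm_cancel[OF sn])
  have Tsh: "T (neu T a w) = (\<Sum>n. cscale (a ^ n) ((T ^^ Suc n) w))" for w
    unfolding neu_def bounded_linear.suminf[OF blT s]
    by (simp add: clinear_cscale[OF T])
  have RT: "neu T a (T w) = T (neu T a w)" for w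
  proof -
    have "neu T a (T w) = (\<Sum>n. cscale (a ^ n) ((T ^^ Suc n) w))"
      unfolding neu_def by (simp add: funpow_Suc_right del: funpow.simps)
    then show ?thesis using Tsh[of w] by simp
  qed
  then show "\<And>w. neu T a (T w) = T (neu T a w)" .
  have inv2: "neu T a w - cscale a (T (neu T a w)) = w" for w
  proof -
    let ?f = "\<lambda>n. cscale (a ^ n) ((T ^^ n) w)"
    have sS: "summable (\<lambda>n. cscale (a ^ n) ((T ^^ Suc n) w))"
    proof (rule summable_norm_cancel, rule summable_comparison_test'[OF gs[of w], where N=0])
      fix n
      have "norm (cscale (a ^ n) ((T ^^ Suc n) w)) = cmod a ^ n * norm ((T ^^ Suc n) w)"
        by (simp add: norm_cscale norm_power)
      also have "\<dots> \<le> cmod a ^ n * norm w"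
        by (rule mult_left_mono[OF funpow_contr[OF Tc]]) simp
      finally show "norm (norm (cscale (a ^ n) ((T ^^ Suc n) w))) \<le> cmod a ^ n * norm w" by simp
    qed
    have "cscale a (T (neu T a w)) = cscale a (\<Sum>n. cscale (a ^ n) ((T ^^ Suc n) w))"
      by (simp only: Tsh)
    also have "\<dots> = (\<Sum>n. cscale a (cscale (a ^ n) ((T ^^ Suc n) w)))"
      by (rule bounded_linear.suminf[OF bl_cscale sS])
    also have "\<dots> = (\<Sum>n. ?f (Suc n))" by (simp add: cscale_cscale)
    also have "\<dots> = neu T a w - ?f 0"
      unfolding neu_def by (rule suminf_split_head[OF s[of w]])
    also have "?f 0 = w" by (simp add: cscale_one)
    finally show ?thesis by simp
  qed
  then show "\<And>w. neu T a w - cscale a (T (neu T a w)) = w" .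
  have lin: "clinear_op (neu T a)"
    unfolding clinear_op_def
  proof (intro conjI allI)
    fix x y
    show "neu T a (x + y) = neu T a x + neu T a y"
      unfolding neu_def suminf_add[OF s s]
      by (simp add: clinear_add[OF clinear_funpow[OF T]] cscale_add_right)
  next
    fix c x
    show "neu T a (cscale c x) = cscale c (neu T a x)"
      unfolding neu_def bounded_linear.suminf[OF bl_cscale s]
      by (simp add: clinear_cscale[OF clinear_funpow[OF T]] cscale_cscale mult.commute)
  qed
  then show "clinear_op (neu T a)" .
  show "neu T a (w - cscale a (T w)) = w" for w
    using inv2[of w] by (simp add: clinear_diff[OF lin] clinear_cscale[OF lin] RT)
  show "norm (neu T a w) \<le> norm w / (1 - cmod a)" for w
  proof -
    have "norm (neu T a w) \<le> (\<Sum>n. norm (cscale (a ^ n) ((T ^^ n) w)))"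
      unfolding neu_def by (rule summable_norm[OF sn])
    also have "\<dots> \<le> (\<Sum>n. cmod a ^ n * norm w)"
      by (rule suminf_le[OF nb sn gs])
    also have "\<dots> = norm w / (1 - cmod a)"
      using a by (simp add: suminf_mult2[symmetric] suminf_geometric summable_geometric)
    finally show ?thesis .
  qed
qed

lemma opinv_eq:
  assumes "\<And>w. R (A w) = w" "\<And>w. A (R w) = w"
  shows "opinv A = R"
  unfolding opinv_def
proof (rule the_equality)
  show "R \<circ> A = id \<and> A \<circ> R = id" using assms by auto
  fix B assume "B \<circ> A = id \<and> A \<circ> B = id"
  then have "B (A (R w)) = R w" "A (B w) = w" for w by (auto simp: fun_eq_iff)
  then show "B = R" using assms by (metis ext)
qed

lemma adj_eq:
  assumes "is_adjoint A (B::'a::chilbert \<Rightarrow> 'a)"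
  shows "adj A = B"
  unfolding adj_def
proof (rule the_equality)
  show "is_adjoint A B" by fact
  fix C assume C: "is_adjoint A C"
  show "C = B"
  proof
    fix y
    have "cinner x (C y - B y) = 0" for x
      using C assms unfolding is_adjoint_def by (simp add: cinner_diff_right)
    then have "cinner (C y - B y) x = 0" for x by (metis cinner_commute_zero)
    then show "C y = B y" using cinner_all_zero by (metis eq_iff_diff_eq_0)
  qed
qed

lemma isometry_cinner:
  assumes T: "clinear_op T" and iso: "\<And>w. norm (T w) = norm w"
  shows "cinner (T x) (T y) = cinner (x::'a::chilbert) y"
proof -
  have re: "Re (cinner (T x) (T y)) = Re (cinner x y)" for x y
    using norm_sq_add[of "T x" "T y"] norm_sq_add[of x y] iso[of "x + y"] iso[of x] iso[of y]
    by (simp add: clinear_add[OF T])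
  have "Re (cinner (T x) (T (cscale \<i> y))) = Re (cinner x (cscale \<i> y))" by (rule re)
  then have im: "Im (cinner (T x) (T y)) = Im (cinner x y)"
    by (simp add: clinear_cscale[OF T] cinner_cscale_right)
  show ?thesis using re[of x y] im by (simp add: complex_eq_iff)
qed

section \<open>Local approximation\<close>

definition la :: "(complex set \<Rightarrow> ('a::chilbert \<Rightarrow> 'a)) \<Rightarrow> ('a \<Rightarrow> 'a) \<Rightarrow> (complex \<Rightarrow> complex) \<Rightarrow> bool" where
  "la E S s \<longleftrightarrow> (\<exists>M. \<forall>c\<in>circle. cmod (s c) \<le> M) \<and>
     (\<forall>e>0. \<exists>d>0. \<forall>B c y. B \<in> circ_sets \<longrightarrow> c \<in> B \<longrightarrow> B \<subseteq> ball c d \<longrightarrow> E B y = y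
        \<longrightarrow> norm (S y - cscale (s c) y) \<le> e * norm y)"

lemma laI:
  assumes "\<And>c. c \<in> circle \<Longrightarrow> cmod (s c) \<le> M"
    and "\<And>e. e > 0 \<Longrightarrow> \<exists>d>0. \<forall>B c y. B \<in> circ_sets \<longrightarrow> c \<in> B \<longrightarrow> B \<subseteq> ball c d \<longrightarrow> E B y = y
        \<longrightarrow> norm (S y - cscale (s c) y) \<le> e * norm y"
  shows "la E S s"
  using assms unfolding la_def by blast

lemma la_bound: "la E S s \<Longrightarrow> \<exists>M\<ge>0. \<forall>c\<in>circle. cmod (s c) \<le> M"
proof -
  assume "la E S s"
  then obtain M where "\<forall>c\<in>circle. cmod (s c) \<le> M" unfolding la_def by blast
  then have "\<forall>c\<in>circle. cmod (s c) \<le> max M 0" by (auto intro: le_max_iff_disj[THEN iffD2])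
  then show ?thesis by (intro exI[of _ "max M 0"]) auto
qed

lemma la_est: "la E S s \<Longrightarrow> e > 0 \<Longrightarrow> \<exists>d>0. \<forall>B c y. B \<in> circ_sets \<longrightarrow> c \<in> B \<longrightarrow> B \<subseteq> ball c d \<longrightarrow> E B y = y
        \<longrightarrow> norm (S y - cscale (s c) y) \<le> e * norm y"
  unfolding la_def by blast

lemma la_cong:
  assumes S: "la E S s" and eq: "\<And>c. c \<in> circle \<Longrightarrow> s c = s' c"
  shows "la E S s'"
proof -
  obtain M where M: "\<And>c. c \<in> circle \<Longrightarrow> cmod (s c) \<le> M" using S unfolding la_def by blast
  show ?thesis
  proof (rule laI[where M=M])
    show "cmod (s' c) \<le> M" if "c \<in> circle" for c using M[OF that] eq[OF that] by simp
    fix e :: real assume e: "e > 0"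
    obtain d where d: "d > 0" and dd: "\<forall>B c y. B \<in> circ_sets \<longrightarrow> c \<in> B \<longrightarrow> B \<subseteq> ball c d \<longrightarrow> E B y = y
        \<longrightarrow> norm (S y - cscale (s c) y) \<le> e * norm y"
      using la_est[OF S e] by blast
    show "\<exists>d>0. \<forall>B c y. B \<in> circ_sets \<longrightarrow> c \<in> B \<longrightarrow> B \<subseteq> ball c d \<longrightarrow> E B y = y
        \<longrightarrow> norm (S y - cscale (s' c) y) \<le> e * norm y"
    proof (intro exI[of _ d] conjI allI impI d)
      fix B c y assume h: "B \<in> circ_sets" "c \<in> B" "B \<subseteq> ball c d" "E B y = y"
      have "c \<in> circle" using h(1,2) circ_sub by blast
      then show "norm (S y - cscale (s' c) y) \<le> e * norm y" using dd h eq by metis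
    qed
  qed
qed

lemma la_id: "la E (\<lambda>y. y) (\<lambda>c. 1)"
proof (rule laI[where M=1])
  fix e :: real assume "e > 0"
  then show "\<exists>d>0. \<forall>B c y. B \<in> circ_sets \<longrightarrow> c \<in> B \<longrightarrow> B \<subseteq> ball c d \<longrightarrow> E B y = y
        \<longrightarrow> norm (y - cscale 1 y) \<le> e * norm y"
    by (intro exI[of _ 1]) (simp add: cscale_one)
qed simp

lemma la_scale:
  assumes S: "la E S s"
  shows "la E (\<lambda>y. cscale a (S y)) (\<lambda>c. a * s c)"
proof -
  obtain M where M: "M \<ge> 0" "\<And>c. c \<in> circle \<Longrightarrow> cmod (s c) \<le> M" using la_bound[OF S] by blast
  show ?thesis
  proof (rule laI[where M="cmod a * M"])
    show "cmod (a * s c) \<le> cmod a * M" if "c \<in> circle" for c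
      using M(2)[OF that] by (simp add: norm_mult mult_left_mono)
    fix e :: real assume e: "e > 0"
    obtain d where d: "d > 0" and dd: "\<forall>B c y. B \<in> circ_sets \<longrightarrow> c \<in> B \<longrightarrow> B \<subseteq> ball c d \<longrightarrow> E B y = y
        \<longrightarrow> norm (S y - cscale (s c) y) \<le> (e / (cmod a + 1)) * norm y"
      using la_est[OF S, of "e / (cmod a + 1)"] e by (smt (verit) divide_pos_pos norm_ge_zero)
    show "\<exists>d>0. \<forall>B c y. B \<in> circ_sets \<longrightarrow> c \<in> B \<longrightarrow> B \<subseteq> ball c d \<longrightarrow> E B y = y
        \<longrightarrow> norm (cscale a (S y) - cscale (a * s c) y) \<le> e * norm y"
    proof (intro exI[of _ d] conjI allI impI d)
      fix B c y assume h: "B \<in> circ_sets" "c \<in> B" "B \<subseteq> ball c d" "E B y = y"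
      have "cscale a (S y) - cscale (a * s c) y = cscale a (S y - cscale (s c) y)"
        by (simp add: cscale_diff_right cscale_cscale)
      then have "norm (cscale a (S y) - cscale (a * s c) y) = cmod a * norm (S y - cscale (s c) y)"
        by (simp add: norm_cscale)
      also have "\<dots> \<le> cmod a * ((e / (cmod a + 1)) * norm y)"
        using dd h by (intro mult_left_mono) auto
      also have "\<dots> \<le> e * norm y"
      proof -
        have p: "cmod a + 1 > 0" using norm_ge_zero[of a] by linarith
        have q: "cmod a / (cmod a + 1) \<le> 1" using p by simp
        have "cmod a * (e / (cmod a + 1)) = e * (cmod a / (cmod a + 1))" by simp
        also have "\<dots> \<le> e * 1" using q e by (intro mult_left_mono) auto
        finally have "cmod a * (e / (cmod a + 1)) \<le> e" by simp
        then have "(cmod a * (e / (cmod a + 1))) * norm y \<le> e * norm y" by (rule mult_right_mono) simp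
        then show ?thesis by (simp add: mult.assoc)
      qed
      finally show "norm (cscale a (S y) - cscale (a * s c) y) \<le> e * norm y" .
    qed
  qed
qed

lemma la_diff:
  assumes S: "la E S s" and T: "la E T t"
  shows "la E (\<lambda>y. S y - T y) (\<lambda>c. s c - t c)"
proof -
  obtain M where M: "M \<ge> 0" "\<And>c. c \<in> circle \<Longrightarrow> cmod (s c) \<le> M" using la_bound[OF S] by blast
  obtain N where N: "N \<ge> 0" "\<And>c. c \<in> circle \<Longrightarrow> cmod (t c) \<le> N" using la_bound[OF T] by blast
  show ?thesis
  proof (rule laI[where M="M + N"])
    show "cmod (s c - t c) \<le> M + N" if "c \<in> circle" for c
      using M(2)[OF that] N(2)[OF that] norm_triangle_ineq4[of "s c" "t c"] by linarith
    fix e :: real assume e: "e > 0"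
    obtain d1 where d1: "d1 > 0" and dd1: "\<forall>B c y. B \<in> circ_sets \<longrightarrow> c \<in> B \<longrightarrow> B \<subseteq> ball c d1 \<longrightarrow> E B y = y
        \<longrightarrow> norm (S y - cscale (s c) y) \<le> (e / 2) * norm y"
      using la_est[OF S, of "e / 2"] e by auto
    obtain d2 where d2: "d2 > 0" and dd2: "\<forall>B c y. B \<in> circ_sets \<longrightarrow> c \<in> B \<longrightarrow> B \<subseteq> ball c d2 \<longrightarrow> E B y = y
        \<longrightarrow> norm (T y - cscale (t c) y) \<le> (e / 2) * norm y"
      using la_est[OF T, of "e / 2"] e by auto
    show "\<exists>d>0. \<forall>B c y. B \<in> circ_sets \<longrightarrow> c \<in> B \<longrightarrow> B \<subseteq> ball c d \<longrightarrow> E B y = y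
        \<longrightarrow> norm (S y - T y - cscale (s c - t c) y) \<le> e * norm y"
    proof (intro exI[of _ "min d1 d2"] conjI allI impI)
      show "min d1 d2 > 0" using d1 d2 by simp
      fix B c y assume h: "B \<in> circ_sets" "c \<in> B" "B \<subseteq> ball c (min d1 d2)" "E B y = y"
      have b1: "B \<subseteq> ball c d1" "B \<subseteq> ball c d2" using h(3) by auto
      have "S y - T y - cscale (s c - t c) y = (S y - cscale (s c) y) - (T y - cscale (t c) y)"
        by (simp add: cscale_diff_left algebra_simps)
      then have "norm (S y - T y - cscale (s c - t c) y) \<le> norm (S y - cscale (s c) y) + norm (T y - cscale (t c) y)"
        by (metis norm_triangle_ineq4)
      also have "\<dots> \<le> (e / 2) * norm y + (e / 2) * norm y"
        using dd1 dd2 h b1 by (intro add_mono) auto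
      finally show "norm (S y - T y - cscale (s c - t c) y) \<le> e * norm y" by simp
    qed
  qed
qed

lemma la_comp:
  assumes S: "la E S s" and T: "la E T t" and Sl: "clinear_op S"
    and Sb0: "\<And>w. norm (S w) \<le> K0 * norm w"
  shows "la E (\<lambda>y. S (T y)) (\<lambda>c. s c * t c)"
proof -
  define K where "K = max K0 0"
  have Sb: "norm (S w) \<le> K * norm w" for w
    using Sb0[of w] by (smt (verit) K_def mult_right_mono norm_ge_zero)
  obtain M where M: "M \<ge> 0" "\<And>c. c \<in> circle \<Longrightarrow> cmod (s c) \<le> M" using la_bound[OF S] by blast
  obtain N where N: "N \<ge> 0" "\<And>c. c \<in> circle \<Longrightarrow> cmod (t c) \<le> N" using la_bound[OF T] by blast
  have K: "K \<ge> 0" by (simp add: K_def)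
  show ?thesis
  proof (rule laI[where M="M * N"])
    show "cmod (s c * t c) \<le> M * N" if "c \<in> circle" for c
      unfolding norm_mult by (rule mult_mono) (use M(2)[OF that] N(2)[OF that] M(1) in auto)
    fix e :: real assume e: "e > 0"
    define e1 where "e1 = e / (2 * (K + 1))"
    define e2 where "e2 = e / (2 * (N + 1))"
    have e1: "e1 > 0" "K * e1 \<le> e / 2" using e K by (auto simp: e1_def field_simps)
    have e2: "e2 > 0" "N * e2 \<le> e / 2" using e N by (auto simp: e2_def field_simps)
    obtain d1 where d1: "d1 > 0" and dd1: "\<forall>B c y. B \<in> circ_sets \<longrightarrow> c \<in> B \<longrightarrow> B \<subseteq> ball c d1 \<longrightarrow> E B y = y
        \<longrightarrow> norm (S y - cscale (s c) y) \<le> e2 * norm y"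
      using la_est[OF S e2(1)] by auto
    obtain d2 where d2: "d2 > 0" and dd2: "\<forall>B c y. B \<in> circ_sets \<longrightarrow> c \<in> B \<longrightarrow> B \<subseteq> ball c d2 \<longrightarrow> E B y = y
        \<longrightarrow> norm (T y - cscale (t c) y) \<le> e1 * norm y"
      using la_est[OF T e1(1)] by auto
    show "\<exists>d>0. \<forall>B c y. B \<in> circ_sets \<longrightarrow> c \<in> B \<longrightarrow> B \<subseteq> ball c d \<longrightarrow> E B y = y
        \<longrightarrow> norm (S (T y) - cscale (s c * t c) y) \<le> e * norm y"
    proof (intro exI[of _ "min d1 d2"] conjI allI impI)
      show "min d1 d2 > 0" using d1 d2 by simp
      fix B c y assume h: "B \<in> circ_sets" "c \<in> B" "B \<subseteq> ball c (min d1 d2)" "E B y = y"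
      have b1: "B \<subseteq> ball c d1" "B \<subseteq> ball c d2" using h(3) by auto
      have cc: "c \<in> circle" using h(1,2) circ_sub by blast
      have "S (T y) - cscale (s c * t c) y = S (T y - cscale (t c) y) + cscale (t c) (S y - cscale (s c) y)"
        by (simp add: clinear_diff[OF Sl] clinear_cscale[OF Sl] cscale_diff_right cscale_cscale mult.commute)
      then have "norm (S (T y) - cscale (s c * t c) y) \<le> norm (S (T y - cscale (t c) y)) + norm (cscale (t c) (S y - cscale (s c) y))"
        by (metis norm_triangle_ineq)
      also have "\<dots> \<le> K * (e1 * norm y) + N * (e2 * norm y)"
      proof (rule add_mono)
        show "norm (S (T y - cscale (t c) y)) \<le> K * (e1 * norm y)"
          using Sb[of "T y - cscale (t c) y"] dd2 h b1 K by (meson mult_left_mono order_trans)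
        have "norm (cscale (t c) (S y - cscale (s c) y)) = cmod (t c) * norm (S y - cscale (s c) y)"
          by (rule norm_cscale)
        also have "\<dots> \<le> N * (e2 * norm y)"
          using N(2)[OF cc] dd1 h b1 N(1) by (intro mult_mono) auto
        finally show "norm (cscale (t c) (S y - cscale (s c) y)) \<le> N * (e2 * norm y)" .
      qed
      also have "\<dots> = (K * e1) * norm y + (N * e2) * norm y" by (simp add: algebra_simps)
      also have "\<dots> \<le> (e / 2) * norm y + (e / 2) * norm y"
        using e1 e2 by (intro add_mono mult_right_mono) auto
      finally show "norm (S (T y) - cscale (s c * t c) y) \<le> e * norm y" by simp
    qed
  qed
qed

lemma la_inv:
  assumes T: "la E T t" and Rl: "clinear_op R" and RT: "\<And>w. R (T w) = w"
    and Rb0: "\<And>w. norm (R w) \<le> K0 * norm w" and m: "m > 0" and tm: "\<And>c. c \<in> circle \<Longrightarrow> m \<le> cmod (t c)"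
  shows "la E R (\<lambda>c. 1 / t c)"
proof -
  define K where "K = max K0 0"
  have Rb: "norm (R w) \<le> K * norm w" for w
    using Rb0[of w] by (smt (verit) K_def mult_right_mono norm_ge_zero)
  have K: "K \<ge> 0" by (simp add: K_def)
  show ?thesis
  proof (rule laI[where M="1 / m"])
    show "cmod (1 / t c) \<le> 1 / m" if "c \<in> circle" for c
      using tm[OF that] m by (simp add: norm_divide frac_le)
    fix e :: real assume e: "e > 0"
    define e1 where "e1 = e * m / (K + 1)"
    have e1: "e1 > 0" "K * e1 / m \<le> e"
    proof -
      show "e1 > 0" using e K m by (simp add: e1_def)
      have "K * e1 / m = e * (K / (K + 1))" using m by (simp add: e1_def)
      also have "\<dots> \<le> e * 1" using K e by (intro mult_left_mono) auto
      finally show "K * e1 / m \<le> e" by simp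
    qed
    obtain d where d: "d > 0" and dd: "\<forall>B c y. B \<in> circ_sets \<longrightarrow> c \<in> B \<longrightarrow> B \<subseteq> ball c d \<longrightarrow> E B y = y
        \<longrightarrow> norm (T y - cscale (t c) y) \<le> e1 * norm y"
      using la_est[OF T e1(1)] by auto
    show "\<exists>d>0. \<forall>B c y. B \<in> circ_sets \<longrightarrow> c \<in> B \<longrightarrow> B \<subseteq> ball c d \<longrightarrow> E B y = y
        \<longrightarrow> norm (R y - cscale (1 / t c) y) \<le> e * norm y"
    proof (intro exI[of _ d] conjI allI impI d)
      fix B c y assume h: "B \<in> circ_sets" "c \<in> B" "B \<subseteq> ball c d" "E B y = y"
      have cc: "c \<in> circle" using h(1,2) circ_sub by blast
      have t0: "t c \<noteq> 0" using tm[OF cc] m by auto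
      have "R y - cscale (1 / t c) y = R (cscale (1 / t c) (cscale (t c) y)) - cscale (1 / t c) (R (T y))"
        using t0 by (simp add: RT cscale_cscale cscale_one)
      also have "\<dots> = cscale (1 / t c) (R (cscale (t c) y - T y))"
        by (simp add: clinear_cscale[OF Rl] clinear_diff[OF Rl] cscale_diff_right)
      finally have "norm (R y - cscale (1 / t c) y) = (1 / cmod (t c)) * norm (R (cscale (t c) y - T y))"
        by (simp add: norm_cscale norm_divide)
      also have "\<dots> \<le> (1 / m) * (K * (e1 * norm y))"
      proof (rule mult_mono)
        show "1 / cmod (t c) \<le> 1 / m" using tm[OF cc] m by (simp add: frac_le)
        have "norm (cscale (t c) y - T y) = norm (T y - cscale (t c) y)" by (rule norm_minus_commute)
        then show "norm (R (cscale (t c) y - T y)) \<le> K * (e1 * norm y)"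
          using Rb[of "cscale (t c) y - T y"] dd h K by (metis mult_left_mono order_trans)
      qed (use m in auto)
      also have "\<dots> = (K * e1 / m) * norm y" by simp
      also have "\<dots> \<le> e * norm y" using e1 by (intro mult_right_mono) auto
      finally show "norm (R y - cscale (1 / t c) y) \<le> e * norm y" .
    qed
  qed
qed



definition bnd :: "('a::chilbert \<Rightarrow> 'a) \<Rightarrow> bool" where
  "bnd S \<longleftrightarrow> (\<exists>K. \<forall>w. norm (S w) \<le> K * norm w)"

definition cm :: "(complex set \<Rightarrow> ('a::chilbert \<Rightarrow> 'a)) \<Rightarrow> ('a \<Rightarrow> 'a) \<Rightarrow> bool" where
  "cm E S \<longleftrightarrow> (\<forall>B\<in>circ_sets. \<forall>y. S (E B y) = E B (S y))"

lemma clinear_id: "clinear_op (\<lambda>x::'a::chilbert. x)"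
  by (simp add: clinear_op_def)
lemma clinear_diff_op: "clinear_op S \<Longrightarrow> clinear_op T \<Longrightarrow> clinear_op (\<lambda>x. S x - T x)"
  by (simp add: clinear_op_def cscale_diff_right)
lemma clinear_scale_op: "clinear_op S \<Longrightarrow> clinear_op (\<lambda>x. cscale a (S x))"
  by (simp add: clinear_op_def cscale_add_right cscale_cscale mult.commute)

lemma bnd_id: "bnd (\<lambda>x::'a::chilbert. x)"
  unfolding bnd_def by (rule exI[of _ 1]) simp
lemma bnd_diff: "bnd S \<Longrightarrow> bnd T \<Longrightarrow> bnd (\<lambda>x. S x - T x)"
  unfolding bnd_def
proof (elim exE)
  fix K L assume K: "\<forall>w. norm (S w) \<le> K * norm w" and L: "\<forall>w. norm (T w) \<le> L * norm w"
  show "\<exists>K. \<forall>w. norm (S w - T w) \<le> K * norm w"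
  proof (intro exI allI)
    fix w
    have "norm (S w - T w) \<le> norm (S w) + norm (T w)" by (rule norm_triangle_ineq4)
    also have "\<dots> \<le> K * norm w + L * norm w" using K L by (intro add_mono) auto
    finally show "norm (S w - T w) \<le> (K + L) * norm w" by (simp add: algebra_simps)
  qed
qed
lemma bnd_scale: "bnd S \<Longrightarrow> bnd (\<lambda>x. cscale a (S x))"
  unfolding bnd_def
proof (elim exE)
  fix K assume K: "\<forall>w. norm (S w) \<le> K * norm w"
  show "\<exists>K. \<forall>w. norm (cscale a (S w)) \<le> K * norm w"
  proof (intro exI allI)
    fix w
    have "norm (cscale a (S w)) = cmod a * norm (S w)" by (rule norm_cscale)
    also have "\<dots> \<le> cmod a * (K * norm w)" using K by (intro mult_left_mono) auto
    finally show "norm (cscale a (S w)) \<le> (cmod a * K) * norm w" by (simp add: mult.assoc)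
  qed
qed
lemma bnd_comp: "bnd S \<Longrightarrow> bnd T \<Longrightarrow> bnd (\<lambda>x. S (T x))"
  unfolding bnd_def
proof (elim exE)
  fix K L assume K: "\<forall>w. norm (S w) \<le> K * norm w" and L: "\<forall>w. norm (T w) \<le> L * norm w"
  define K' where "K' = max K 0"
  have K': "norm (S w) \<le> K' * norm w" for w
    using K[rule_format, of w] by (smt (verit) K'_def mult_right_mono norm_ge_zero)
  show "\<exists>K. \<forall>w. norm (S (T w)) \<le> K * norm w"
  proof (intro exI allI)
    fix w
    have "norm (S (T w)) \<le> K' * norm (T w)" by (rule K')
    also have "\<dots> \<le> K' * (L * norm w)" using L by (intro mult_left_mono) (auto simp: K'_def)
    finally show "norm (S (T w)) \<le> (K' * L) * norm w" by (simp add: mult.assoc)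
  qed
qed
lemma bnd_le: "bnd S \<Longrightarrow> \<exists>K. \<forall>w. norm (S w) \<le> K * norm w"
  unfolding bnd_def .
lemma bndI: "(\<And>w. norm (S w) \<le> K * norm w) \<Longrightarrow> bnd S"
  unfolding bnd_def by blast

lemma bounded_opI: "clinear_op S \<Longrightarrow> bnd S \<Longrightarrow> bounded_op S"
  unfolding bounded_op_def bnd_def by (metis mult.commute)

context
  fixes E :: "complex set \<Rightarrow> ('a::chilbert \<Rightarrow> 'a)"
  assumes SM: "spectral_measure E"
begin

lemma cm_id: "cm E (\<lambda>x. x)" by (simp add: cm_def)
lemma cm_comp: "cm E S \<Longrightarrow> cm E T \<Longrightarrow> cm E (\<lambda>x. S (T x))" by (simp add: cm_def)
lemma cm_diff: "cm E S \<Longrightarrow> cm E T \<Longrightarrow> cm E (\<lambda>x. S x - T x)"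
  by (simp add: cm_def clinear_diff[OF sm_lin[OF SM]])
lemma cm_scale: "cm E S \<Longrightarrow> cm E (\<lambda>x. cscale a (S x))"
  by (simp add: cm_def clinear_cscale[OF sm_lin[OF SM]])
lemma cm_inv: "cm E T \<Longrightarrow> (\<And>w. R (T w) = w) \<Longrightarrow> (\<And>w. T (R w) = w) \<Longrightarrow> cm E R"
  unfolding cm_def by metis

lemma main_Q:
  fixes A :: "'a \<Rightarrow> 'a" and f :: "complex \<Rightarrow> complex"
  assumes Al: "clinear_op A" and Ac: "cm E A" and Af: "la E A f"
    and fc: "continuous_on circle f" and fm: "f \<in> borel_measurable borel"
  shows "cinner (A x) x = (\<integral>w. f w \<partial>(spec_qmeasure E x))"
proof -
  obtain M where M: "M \<ge> 0" "\<And>c. c \<in> circle \<Longrightarrow> cmod (f c) \<le> M" using la_bound[OF Af] by blast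
  define Q where "Q = (\<lambda>y. cinner (A y) y - (\<integral>w. f w \<partial>(spec_qmeasure E y)))"
  have "Q x = 0"
  proof (rule partition_zero[OF SM])
    fix B C y z assume B: "B \<in> circ_sets" and C: "C \<in> circ_sets" and d: "B \<inter> C = {}"
      and y: "E B y = y" and z: "E C z = z"
    have Ay: "E B (A y) = A y" using Ac B y unfolding cm_def by metis
    have Az: "E C (A z) = A z" using Ac C z unfolding cm_def by metis
    have o1: "cinner (A y) z = 0" using sm_orth[OF SM B C d, of "A y" z] Ay z by simp
    have o2: "cinner (A z) y = 0" using sm_orth[OF SM C B _ , of "A z" y] Az y d by (simp add: Int_commute)
    have "cinner (A (y + z)) (y + z) = cinner (A y) y + cinner (A z) z"
      by (simp add: clinear_add[OF Al] cinner_simps o1 o2)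
    moreover have "(\<integral>w. f w \<partial>(spec_qmeasure E (y + z))) = (\<integral>w. f w \<partial>(spec_qmeasure E y)) + (\<integral>w. f w \<partial>(spec_qmeasure E z))"
      by (rule sq_integral_add[OF SM B C d y z fm M(2)])
    ultimately show "Q (y + z) = Q y + Q z" unfolding Q_def by simp
  next
    fix e :: real assume e: "e > 0"
    have uc: "uniformly_continuous_on circle f" by (rule compact_uniformly_continuous[OF fc]) simp
    obtain d1 where d1: "d1 > 0" and dd1: "\<And>w c. w \<in> circle \<Longrightarrow> c \<in> circle \<Longrightarrow> dist w c < d1 \<Longrightarrow> dist (f w) (f c) < e / 2"
      using uc e unfolding uniformly_continuous_on_def by (metis half_gt_zero)
    obtain d2 where d2: "d2 > 0" and dd2: "\<forall>B c y. B \<in> circ_sets \<longrightarrow> c \<in> B \<longrightarrow> B \<subseteq> ball c d2 \<longrightarrow> E B y = y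
        \<longrightarrow> norm (A y - cscale (f c) y) \<le> (e / 2) * norm y"
      using la_est[OF Af, of "e / 2"] e by auto
    show "\<exists>d>0. \<forall>B c y. B \<in> circ_sets \<longrightarrow> c \<in> B \<longrightarrow> B \<subseteq> ball c d \<longrightarrow> E B y = y
      \<longrightarrow> cmod (Q y) \<le> e * (norm y)\<^sup>2"
    proof (intro exI[of _ "min d1 d2"] conjI allI impI)
      show "min d1 d2 > 0" using d1 d2 by simp
      fix B c y assume B: "B \<in> circ_sets" and c: "c \<in> B" and Bd: "B \<subseteq> ball c (min d1 d2)" and y: "E B y = y"
      have cc: "c \<in> circle" using B c circ_sub by blast
      have i1: "cmod (cinner (A y) y - f c * of_real ((norm y)\<^sup>2)) \<le> (e / 2) * (norm y)\<^sup>2"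
      proof -
        have "cinner (A y) y - f c * of_real ((norm y)\<^sup>2) = cinner (A y - cscale (f c) y) y"
          by (simp add: cinner_simps cinner_self_norm)
        also have "cmod \<dots> \<le> norm (A y - cscale (f c) y) * norm y" by (rule cauchy_schwarz)
        also have "\<dots> \<le> ((e / 2) * norm y) * norm y"
        proof -
          have Bd2: "B \<subseteq> ball c d2" using Bd by auto
          have "norm (A y - cscale (f c) y) \<le> (e / 2) * norm y" using dd2 B c Bd2 y by blast
          then show ?thesis by (rule mult_right_mono) simp
        qed
        finally show ?thesis by (simp add: power2_eq_square mult.assoc)
      qed
      have i2: "cmod ((\<integral>w. f w \<partial>(spec_qmeasure E y)) - f c * of_real ((norm y)\<^sup>2)) \<le> (e / 2) * (norm y)\<^sup>2"
      proof (rule sq_integral_est[OF SM B y fm M(2)])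
        fix w assume w: "w \<in> B"
        have "w \<in> circle" using B w circ_sub by blast
        moreover have "dist w c < d1" using Bd w by (auto simp: dist_commute)
        ultimately have "dist (f w) (f c) < e / 2" using dd1 cc by blast
        then show "cmod (f w - f c) \<le> e / 2" by (simp add: dist_norm)
      qed
      have "Q y = (cinner (A y) y - f c * of_real ((norm y)\<^sup>2)) - ((\<integral>w. f w \<partial>(spec_qmeasure E y)) - f c * of_real ((norm y)\<^sup>2))"
        unfolding Q_def by simp
      then have "cmod (Q y) \<le> cmod (cinner (A y) y - f c * of_real ((norm y)\<^sup>2)) + cmod ((\<integral>w. f w \<partial>(spec_qmeasure E y)) - f c * of_real ((norm y)\<^sup>2))"
        by (metis norm_triangle_ineq4)
      also have "\<dots> \<le> (e / 2) * (norm y)\<^sup>2 + (e / 2) * (norm y)\<^sup>2" using i1 i2 by (rule add_mono)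
      finally show "cmod (Q y) \<le> e * (norm y)\<^sup>2" by simp
    qed
  qed
  then show ?thesis unfolding Q_def by simp
qed

end



lemma la_comp':
  assumes "la E S s" "la E T t" "clinear_op S" "bnd S"
  shows "la E (\<lambda>y. S (T y)) (\<lambda>c. s c * t c)"
proof -
  obtain K where "\<And>w. norm (S w) \<le> K * norm w" using assms(4) unfolding bnd_def by blast
  then show ?thesis by (rule la_comp[OF assms(1-3)])
qed

lemma la_inv':
  assumes "la E T t" "clinear_op R" "\<And>w. R (T w) = w" "bnd R" "m > 0" "\<And>c. c \<in> circle \<Longrightarrow> m \<le> cmod (t c)"
  shows "la E R (\<lambda>c. 1 / t c)"
proof -
  obtain K where "\<And>w. norm (R w) \<le> K * norm w" using assms(4) unfolding bnd_def by blast
  then show ?thesis by (rule la_inv[OF assms(1-3) _ assms(5-6)])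
qed

lemma sq_diff_bound:
  fixes p q d :: real
  assumes "0 \<le> q" "0 \<le> p" "\<bar>p - q\<bar> \<le> 2 * d * q" "0 \<le> d" "d \<le> 1"
  shows "\<bar>p\<^sup>2 - q\<^sup>2\<bar> \<le> 8 * d * q\<^sup>2"
proof -
  have f: "p\<^sup>2 - q\<^sup>2 = (p - q) * (p + q)" by (simp add: power2_eq_square algebra_simps)
  have "\<bar>p\<^sup>2 - q\<^sup>2\<bar> = \<bar>p - q\<bar> * \<bar>p + q\<bar>" unfolding f by (rule abs_mult)
  also have "\<bar>p + q\<bar> = p + q" using assms by simp
  finally have "\<bar>p\<^sup>2 - q\<^sup>2\<bar> = \<bar>p - q\<bar> * (p + q)" .
  also have "\<dots> \<le> (2 * d * q) * (4 * q)"
  proof (rule mult_mono)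
    have "p \<le> q + 2 * d * q" using assms(3) by linarith
    also have "\<dots> \<le> q + 2 * q"
    proof -
      have "d * q \<le> 1 * q" by (rule mult_right_mono) (use assms in auto)
      then show ?thesis by simp
    qed
    finally show "p + q \<le> 4 * q" by linarith
  qed (use assms in auto)
  also have "\<dots> = 8 * d * q\<^sup>2" by (simp add: power2_eq_square)
  finally show ?thesis .
qed

lemma G_bound:
  assumes d0: "0 < \<delta>" and d1: "\<delta> < 1" and l: "l \<in> G_delta \<delta>"
  shows "cmod l < 2"
proof -
  define A where "A = (1 + \<delta>)\<^sup>2"
  define B where "B = (1 - \<delta>)\<^sup>2"
  have g: "(Re l)\<^sup>2 / A + (Im l)\<^sup>2 / B < 1" using l by (simp add: G_delta_def A_def B_def)
  have pA: "A > 0" "B > 0" using d0 d1 by (auto simp: A_def B_def)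
  have BA: "B \<le> A" using d0 d1 by (simp add: A_def B_def power2_eq_square algebra_simps)
  have h: "(Im l)\<^sup>2 / A \<le> (Im l)\<^sup>2 / B"
    by (rule divide_left_mono[OF BA]) (use pA in auto)
  have "((Re l)\<^sup>2 + (Im l)\<^sup>2) / A = (Re l)\<^sup>2 / A + (Im l)\<^sup>2 / A" by (rule add_divide_distrib)
  also have "\<dots> < 1" using g h by linarith
  finally have "((Re l)\<^sup>2 + (Im l)\<^sup>2) / A < 1" .
  then have "(Re l)\<^sup>2 + (Im l)\<^sup>2 < 1 * A" using pos_divide_less_eq[OF pA(1)] by blast
  then have "(cmod l)\<^sup>2 < (1 + \<delta>)\<^sup>2" unfolding cmod_power2 A_def by simp
  then have "cmod l < 1 + \<delta>" by (rule power2_less_imp_less) (use d0 in auto)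
  then show ?thesis using d1 by simp
qed

lemma circ_inv:
  assumes c: "c \<in> circle" shows "cnj c = 1 / c"
proof -
  have c0: "c \<noteq> 0" using c by auto
  have "complex_of_real ((cmod c)\<^sup>2) = c * cnj c" by (rule complex_norm_square)
  then have "c * cnj c = 1" using c by simp
  then show ?thesis using c0 by (simp add: eq_divide_eq mult.commute)
qed

lemma den_nz: "c \<in> circle \<Longrightarrow> cmod l < 2 \<Longrightarrow> 2 - c * l \<noteq> 0"
proof
  assume c: "c \<in> circle" and l: "cmod l < 2" and h: "2 - c * l = 0"
  from h have "c * l = 2" by simp
  then have "cmod (c * l) = 2" by simp
  then show False using c l by (simp add: norm_mult)
qed

lemma scal:
  assumes c: "c \<in> circle" and l: "cmod l < 2" and m: "cmod m < 2"
  shows "1 - (1 / (1 - cnj (m / 2) * (1 / c)) * (complex_of_real \<delta> * (1 / c) - cnj (m / 2) * 1)) *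
             ((complex_of_real \<delta> * c - l / 2 * 1) * (1 / (1 - l / 2 * c)))
       = 1 - cnj (Psi \<delta> c m) * Psi \<delta> c l"
proof -
  have c0: "c \<noteq> 0" using c by auto
  have cc: "cnj c = 1 / c" by (rule circ_inv[OF c])
  have dl: "2 - c * l \<noteq> 0" by (rule den_nz[OF c l])
  have dm: "2 - c * m \<noteq> 0" by (rule den_nz[OF c m])
  have dm': "2 - cnj c * cnj m \<noteq> 0"
  proof
    assume h: "2 - cnj c * cnj m = 0"
    have "cnj (2 - c * m) = 2 - cnj c * cnj m" by simp
    then have "cnj (2 - c * m) = 0" using h by simp
    then show False using dm by (simp only: complex_cnj_zero_iff)
  qed
  have e1: "(complex_of_real \<delta> * c - l / 2 * 1) * (1 / (1 - l / 2 * c)) = Psi \<delta> c l"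
  proof -
    have "1 - l / 2 * c = (2 - c * l) / 2" by (simp add: field_simps)
    then show ?thesis unfolding Psi_def using dl by (simp add: field_simps)
  qed
  have e2: "1 / (1 - cnj (m / 2) * (1 / c)) * (complex_of_real \<delta> * (1 / c) - cnj (m / 2) * 1) = cnj (Psi \<delta> c m)"
  proof -
    have "cnj (Psi \<delta> c m) = (2 * cnj c * complex_of_real \<delta> - cnj m) / (2 - cnj c * cnj m)"
      unfolding Psi_def by simp
    also have "\<dots> = (2 * (1 / c) * complex_of_real \<delta> - cnj m) / (2 - (1 / c) * cnj m)" by (simp only: cc)
    finally have ee: "cnj (Psi \<delta> c m) = (2 * (1 / c) * complex_of_real \<delta> - cnj m) / (2 - (1 / c) * cnj m)" .
    have d2: "2 - (1 / c) * cnj m \<noteq> 0" using dm' cc by simp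
    have "1 - cnj (m / 2) * (1 / c) = (2 - (1 / c) * cnj m) / 2" by (simp add: field_simps)
    then show ?thesis unfolding ee using d2 c0 by (simp add: field_simps)
  qed
  show ?thesis unfolding e1 e2 ..
qed



lemma cnj_meas [measurable]: "cnj \<in> borel_measurable borel"
  by (rule borel_measurable_continuous_onI) (rule continuous_on_cnj[OF continuous_on_id])

lemma P_side:
  assumes SM: "spectral_measure E" and Wl: "clinear_op W" and Wb: "bnd W" and Wc: "cm E W"
    and laW: "la E W gw"
  shows "clinear_op (\<lambda>x. cscale (complex_of_real \<delta>) (W x) - cscale a x)"
    and "bnd (\<lambda>x. cscale (complex_of_real \<delta>) (W x) - cscale a x)"
    and "cm E (\<lambda>x. cscale (complex_of_real \<delta>) (W x) - cscale a x)"
    and "la E (\<lambda>x. cscale (complex_of_real \<delta>) (W x) - cscale a x) (\<lambda>c. complex_of_real \<delta> * gw c - a * 1)"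
proof -
  show "clinear_op (\<lambda>x. cscale (complex_of_real \<delta>) (W x) - cscale a x)"
    using clinear_diff_op[OF clinear_scale_op[OF Wl] clinear_scale_op[OF clinear_id]] by simp
  show "bnd (\<lambda>x. cscale (complex_of_real \<delta>) (W x) - cscale a x)"
    using bnd_diff[OF bnd_scale[OF Wb] bnd_scale[OF bnd_id]] by simp
  show "cm E (\<lambda>x. cscale (complex_of_real \<delta>) (W x) - cscale a x)"
    using cm_diff[OF SM cm_scale[OF SM Wc] cm_scale[OF SM cm_id[OF SM]]] by simp
  show "la E (\<lambda>x. cscale (complex_of_real \<delta>) (W x) - cscale a x) (\<lambda>c. complex_of_real \<delta> * gw c - a * 1)"
    using la_diff[OF la_scale[OF laW] la_scale[OF la_id]] by simp
qed

lemma R_side: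
  assumes SM: "spectral_measure E" and Wl: "clinear_op W" and Wn: "\<And>w. norm (W w) \<le> norm w"
    and Wc: "cm E W" and laW: "la E W gw" and gw1: "\<And>c. c \<in> circle \<Longrightarrow> cmod (gw c) = 1"
    and a: "cmod a < 1"
  shows "clinear_op (neu W a)"
    and "bnd (neu W a)"
    and "cm E (neu W a)"
    and "la E (neu W a) (\<lambda>c. 1 / (1 - a * gw c))"
    and "opinv (\<lambda>x. x - cscale a (W x)) = neu W a"
    and "\<And>w. neu W a w - cscale a (W (neu W a w)) = w"
proof -
  note N = neumann[OF Wl Wn a]
  show Rl: "clinear_op (neu W a)" by (rule N(1))
  show Rb: "bnd (neu W a)"
  proof (rule bndI[where K="1 / (1 - cmod a)"])
    fix w show "norm (neu W a w) \<le> 1 / (1 - cmod a) * norm w" using N(4)[of w] by simp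
  qed
  have cmT: "cm E (\<lambda>x. x - cscale a (W x))"
    by (rule cm_diff[OF SM cm_id[OF SM] cm_scale[OF SM Wc]])
  show "cm E (neu W a)"
    by (rule cm_inv[OF SM cmT]) (simp_all add: N(2) N(3))
  have laT: "la E (\<lambda>x. x - cscale a (W x)) (\<lambda>c. 1 - a * gw c)"
    using la_diff[OF la_id la_scale[OF laW]] by simp
  show "la E (neu W a) (\<lambda>c. 1 / (1 - a * gw c))"
  proof (rule la_inv'[OF laT Rl _ Rb, where m="1 - cmod a"])
    show "neu W a (w - cscale a (W w)) = w" for w by (rule N(2))
    show "0 < 1 - cmod a" using a by simp
    fix c :: complex assume c: "c \<in> circle"
    have "norm (1::complex) - norm (a * gw c) \<le> norm (1 - a * gw c)" by (rule norm_triangle_ineq2)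
    then show "1 - cmod a \<le> cmod (1 - a * gw c)" using gw1[OF c] by (simp add: norm_mult)
  qed
  show "opinv (\<lambda>x. x - cscale a (W x)) = neu W a"
    by (rule opinv_eq) (simp_all add: N(2) N(3))
  show "\<And>w. neu W a w - cscale a (W (neu W a w)) = w" by (rule N(3))
qed

theorem lemma4p2:
  fixes \<delta> :: real and U :: "'a::chilbert \<Rightarrow> 'a"
    and E :: "complex set \<Rightarrow> ('a \<Rightarrow> 'a)" and l m :: complex
  assumes "0 < \<delta>" and "\<delta> < 1"
    and "unitary_op U"
    and "spectral_measure E"
    and "spectral_integral_is E (\<lambda>\<omega>. \<omega>) (adj U)"
    and "l \<in> G_delta \<delta>" and "m \<in> G_delta \<delta>"
  shows "spectral_integral_is E
           (\<lambda>\<omega>. 1 - cnj (Psi \<delta> \<omega> m) * Psi \<delta> \<omega> l)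
           (\<lambda>x. x - adj (op_lambda_U \<delta> m U) (op_lambda_U \<delta> l U x))"
proof -
  note SM = assms(4)
  define V where "V = adj U"
  have Ub: "bounded_op U" using assms(3) unfolding unitary_op_def by blast
  have Ul: "clinear_op U" using Ub unfolding bounded_op_def by blast
  have VU: "V (U w) = w" for w using assms(3) unfolding unitary_op_def V_def by (metis comp_apply id_apply)
  have UV: "U (V w) = w" for w using assms(3) unfolding unitary_op_def V_def by (metis comp_apply id_apply)
  have VS: "spectral_integral_is E (\<lambda>w. w) V" using assms(5) unfolding V_def .
  have Vl: "clinear_op V" by (rule V_lin[OF SM VS])
  have Vcm: "cm E V" unfolding cm_def using V_comm[OF SM VS] by blast
  have laV: "la E V (\<lambda>c. c)"
  proof (rule laI[where M=1])
    show "cmod c \<le> 1" if "c \<in> circle" for c using that by simp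
    fix e :: real assume e: "e > 0"
    show "\<exists>d>0. \<forall>B c y. B \<in> circ_sets \<longrightarrow> c \<in> B \<longrightarrow> B \<subseteq> ball c d \<longrightarrow> E B y = y
        \<longrightarrow> norm (V y - cscale c y) \<le> e * norm y"
    proof (intro exI[of _ "e / 2"] conjI allI impI)
      show "e / 2 > 0" using e by simp
      fix B c y assume h: "B \<in> circ_sets" "c \<in> B" "B \<subseteq> ball c (e / 2)" "E B y = y"
      show "norm (V y - cscale c y) \<le> e * norm y"
        using V_local[OF SM VS h(1) h(2) h(3) h(4)] e by simp
    qed
  qed
  have Viso: "norm (V w) = norm w" for w
  proof -
    define Q where "Q = (\<lambda>y. complex_of_real ((norm (V y))\<^sup>2 - (norm y)\<^sup>2))"
    have "Q w = 0"
    proof (rule partition_zero[OF SM])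
      fix B C y z assume B: "B \<in> circ_sets" and C: "C \<in> circ_sets" and d: "B \<inter> C = {}"
        and y: "E B y = y" and z: "E C z = z"
      have Vy: "E B (V y) = V y" using V_comm[OF SM VS B, of y] y by simp
      have Vz: "E C (V z) = V z" using V_comm[OF SM VS C, of z] z by simp
      have o1: "cinner (V y) (V z) = 0" using sm_orth[OF SM B C d, of "V y" "V z"] Vy Vz by simp
      have o2: "cinner y z = 0" using sm_orth[OF SM B C d, of y z] y z by simp
      have "(norm (V (y + z)))\<^sup>2 - (norm (y + z))\<^sup>2 = ((norm (V y))\<^sup>2 - (norm y)\<^sup>2) + ((norm (V z))\<^sup>2 - (norm z)\<^sup>2)"
        using pythag[OF o1] pythag[OF o2] by (simp add: clinear_add[OF Vl])
      then show "Q (y + z) = Q y + Q z" unfolding Q_def by (metis of_real_add)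
    next
      fix e :: real assume e: "e > 0"
      show "\<exists>d>0. \<forall>B c y. B \<in> circ_sets \<longrightarrow> c \<in> B \<longrightarrow> B \<subseteq> ball c d \<longrightarrow> E B y = y
        \<longrightarrow> cmod (Q y) \<le> e * (norm y)\<^sup>2"
      proof (intro exI[of _ "min 1 (e / 8)"] conjI allI impI)
        show "min 1 (e / 8) > 0" using e by simp
        fix B c y assume h: "B \<in> circ_sets" "c \<in> B" "B \<subseteq> ball c (min 1 (e / 8))" "E B y = y"
        define d where "d = min 1 (e / 8)"
        have d0: "0 \<le> d" "d \<le> 1" "8 * d \<le> e" using e by (auto simp: d_def)
        have cc: "cmod c = 1" using h(1,2) circ_sub by fastforce
        have "norm (V y - cscale c y) \<le> 2 * d * norm y"
          unfolding d_def by (rule V_local[OF SM VS h(1) h(2) h(3) h(4)]) (use e in simp)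
        moreover have "\<bar>norm (V y) - norm (cscale c y)\<bar> \<le> norm (V y - cscale c y)"
          by (rule norm_triangle_ineq3)
        ultimately have "\<bar>norm (V y) - norm y\<bar> \<le> 2 * d * norm y" by (simp add: norm_cscale cc)
        then have "\<bar>(norm (V y))\<^sup>2 - (norm y)\<^sup>2\<bar> \<le> 8 * d * (norm y)\<^sup>2"
          by (intro sq_diff_bound) (use d0 in auto)
        also have "\<dots> \<le> e * (norm y)\<^sup>2" using d0 by (intro mult_right_mono) auto
        finally show "cmod (Q y) \<le> e * (norm y)\<^sup>2" unfolding Q_def by (simp only: norm_of_real)
      qed
    qed
    then have "(norm (V w))\<^sup>2 - (norm w)\<^sup>2 = 0" unfolding Q_def by (simp only: of_real_eq_0_iff)
    then have "(norm (V w))\<^sup>2 = (norm w)\<^sup>2" by simp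
    then show ?thesis by (simp add: power2_eq_iff_nonneg)
  qed
  have Uiso: "norm (U w) = norm w" for w using Viso[of "U w"] VU by simp
  have Vc: "norm (V w) \<le> norm w" for w by (simp add: Viso)
  have Uc: "norm (U w) \<le> norm w" for w by (simp add: Uiso)
  have adjV: "cinner (V x) y = cinner x (U y)" for x y
  proof -
    have "cinner (V x) y = cinner (V x) (V (U y))" by (simp add: VU)
    also have "\<dots> = cinner x (U y)" by (rule isometry_cinner[OF Vl Viso])
    finally show ?thesis .
  qed
  have bV: "bnd V" by (rule bndI[where K=1]) (simp add: Vc)
  have bU: "bnd U" by (rule bndI[where K=1]) (simp add: Uc)
  have Ucm: "cm E U" by (rule cm_inv[OF SM Vcm]) (simp_all add: UV VU)
  have laU: "la E U (\<lambda>c. 1 / c)"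
    by (rule la_inv'[OF laV Ul _ bU, where m=1]) (simp_all add: UV)
  have lb: "cmod l < 2" by (rule G_bound[OF assms(1,2,6)])
  have mb: "cmod m < 2" by (rule G_bound[OF assms(1,2,7)])
  have la1: "cmod (l / 2) < 1" using lb by (simp add: norm_divide)
  have ma1: "cmod (m / 2) < 1" using mb by (simp add: norm_divide)
  have ma1': "cmod (cnj (m / 2)) < 1" using ma1 by simp
  have g1: "\<And>c. c \<in> circle \<Longrightarrow> cmod c = 1" by simp
  have g2: "\<And>c. c \<in> circle \<Longrightarrow> cmod (1 / c) = 1" by (simp add: norm_divide)
  note RV = R_side[OF SM Vl Vc Vcm laV g1 la1] R_side[OF SM Vl Vc Vcm laV g1 ma1]
  note RU = R_side[OF SM Ul Uc Ucm laU g2 ma1']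
  note PV = P_side[OF SM Vl bV Vcm laV, where \<delta>=\<delta> and a="l / 2"]
  note PU = P_side[OF SM Ul bU Ucm laU, where \<delta>=\<delta> and a="cnj (m / 2)"]
  define Ml where "Ml = (\<lambda>x. cscale (complex_of_real \<delta>) (V (neu V (l / 2) x)) - cscale (l / 2) (neu V (l / 2) x))"
  define Pm where "Pm = (\<lambda>x. cscale (complex_of_real \<delta>) (V x) - cscale (m / 2) x)"
  define X where "X = (\<lambda>x. neu U (cnj (m / 2)) (cscale (complex_of_real \<delta>) (U x) - cscale (cnj (m / 2)) x))"
  have OLl: "op_lambda_U \<delta> l U = Ml"
    unfolding op_lambda_U_def V_def[symmetric] Ml_def using RV(5) by (simp add: comp_def)
  have OLm: "op_lambda_U \<delta> m U = (\<lambda>x. Pm (neu V (m / 2) x))"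
    unfolding op_lambda_U_def V_def[symmetric] Pm_def using RV(11) by (simp add: comp_def)
  have adjX: "adj (op_lambda_U \<delta> m U) = X"
  proof (rule adj_eq)
    show "is_adjoint (op_lambda_U \<delta> m U) X"
      unfolding is_adjoint_def OLm
    proof (intro allI)
      fix x y
      let ?w = "neu V (m / 2) x"
      let ?P' = "cscale (complex_of_real \<delta>) (U y) - cscale (cnj (m / 2)) y"
      let ?R' = "neu U (cnj (m / 2))"
      have s1: "cinner (Pm w) v = cinner w (cscale (complex_of_real \<delta>) (U v) - cscale (cnj (m / 2)) v)" for w v
        unfolding Pm_def by (simp add: cinner_simps adjV)
      have s2: "cinner w (u - cscale (cnj (m / 2)) (U u)) = cinner (w - cscale (m / 2) (V w)) u" for w u
        by (simp add: cinner_simps adjV)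
      have "cinner (Pm ?w) y = cinner ?w ?P'" by (rule s1)
      also have "\<dots> = cinner ?w (?R' ?P' - cscale (cnj (m / 2)) (U (?R' ?P')))" using RU(6)[of ?P'] by simp
      also have "\<dots> = cinner (?w - cscale (m / 2) (V ?w)) (?R' ?P')" by (rule s2)
      also have "?w - cscale (m / 2) (V ?w) = x" by (rule RV(12))
      finally show "cinner (Pm ?w) y = cinner x (X y)" unfolding X_def .
    qed
  qed
  define A where "A = (\<lambda>x. x - X (Ml x))"
  have Aeq: "(\<lambda>x. x - adj (op_lambda_U \<delta> m U) (op_lambda_U \<delta> l U x)) = A"
    unfolding adjX OLl A_def ..
  have laMl: "la E Ml (\<lambda>c. (complex_of_real \<delta> * c - l / 2 * 1) * (1 / (1 - l / 2 * c)))"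
    unfolding Ml_def by (rule la_comp'[OF PV(4) RV(4) PV(1) PV(2)])
  have laX: "la E X (\<lambda>c. (1 / (1 - cnj (m / 2) * (1 / c))) * (complex_of_real \<delta> * (1 / c) - cnj (m / 2) * 1))"
    unfolding X_def by (rule la_comp'[OF RU(4) PU(4) RU(1) RU(2)])
  have linMl: "clinear_op Ml" unfolding Ml_def by (rule clinear_comp[OF PV(1) RV(1)])
  have linX: "clinear_op X" unfolding X_def by (rule clinear_comp[OF RU(1) PU(1)])
  have bMl: "bnd Ml" unfolding Ml_def by (rule bnd_comp[OF PV(2) RV(2)])
  have bX: "bnd X" unfolding X_def by (rule bnd_comp[OF RU(2) PU(2)])
  have cMl: "cm E Ml" unfolding Ml_def by (rule cm_comp[OF SM PV(3) RV(3)])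
  have cX: "cm E X" unfolding X_def by (rule cm_comp[OF SM RU(3) PU(3)])
  have laA0: "la E A (\<lambda>c. 1 - ((1 / (1 - cnj (m / 2) * (1 / c))) * (complex_of_real \<delta> * (1 / c) - cnj (m / 2) * 1)) *
             ((complex_of_real \<delta> * c - l / 2 * 1) * (1 / (1 - l / 2 * c))))"
    unfolding A_def by (rule la_diff[OF la_id la_comp'[OF laX laMl linX bX]])
  have laA: "la E A (\<lambda>\<omega>. 1 - cnj (Psi \<delta> \<omega> m) * Psi \<delta> \<omega> l)"
    by (rule la_cong[OF laA0]) (rule scal[OF _ lb mb])
  have linA: "clinear_op A" unfolding A_def by (rule clinear_diff_op[OF clinear_id clinear_comp[OF linX linMl]])
  have bA: "bnd A" unfolding A_def by (rule bnd_diff[OF bnd_id bnd_comp[OF bX bMl]])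
  have cA: "cm E A" unfolding A_def by (rule cm_diff[OF SM cm_id[OF SM] cm_comp[OF SM cX cMl]])
  have fc: "continuous_on circle (\<lambda>\<omega>. 1 - cnj (Psi \<delta> \<omega> m) * Psi \<delta> \<omega> l)"
    unfolding Psi_def by (intro continuous_intros) (auto dest: den_nz[OF _ lb] den_nz[OF _ mb])
  have fm1: "(\<lambda>\<omega>. Psi \<delta> \<omega> m) \<in> borel_measurable borel" "(\<lambda>\<omega>. Psi \<delta> \<omega> l) \<in> borel_measurable borel"
    unfolding Psi_def by measurable
  have fm: "(\<lambda>\<omega>. 1 - cnj (Psi \<delta> \<omega> m) * Psi \<delta> \<omega> l) \<in> borel_measurable borel"
    using fm1 by measurable
  show ?thesis
    unfolding Aeq spectral_integral_is_def
  proof (intro conjI allI)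
    show "bounded_op A" by (rule bounded_opI[OF linA bA])
    fix x show "cinner (A x) x = (\<integral>\<omega>. 1 - cnj (Psi \<delta> \<omega> m) * Psi \<delta> \<omega> l \<partial>spec_qmeasure E x)"
      by (rule main_Q[OF SM linA cA laA fc fm])
  qed
qed


end
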